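(* Exactly $\gcd(3,q-1)$ of the $\mathbb{F}_q$-planes in $\mathrm{orb}(\mathsf S_T)$ are fixed setwise by $\phi$, namely the sets $\pi_\lambda=\{(x,x^q,\lambda x^{q^2}):x\in\mathbb{F}_{q^3}^*\}$ with $\lambda\in\mathbb{F}_q$, $\lambda^3=1$. Further $\pi_1=\mathcal P_{2,q}$, and if $\gcd(3,q-1)=3$ then the other two $\mathbb{F}_q$-planes fixed setwise by $\phi$ consist of only Type III points and only Type III lines.
   Context: Let $q$ be a prime power, $\mathbb{F}_{q^3}^*=\mathbb{F}_{q^3}\setminus\{0\}$. Points of $\mathrm{PG}(2,q^3)$ have homogeneous coordinates $(x,y,z)$ and lines $[a,b,c]$. An $\mathbb{F}_q$-plane is a subplane of order $q$; its lines are those meeting it in $q+1$ points. Let $\phi$ be the collineation $(x,y,z)\mapsto(z^q,x^q,y^q)$ (on lines $[d,e,f]\mapsto[f^q,d^q,e^q]$), whose fixed points form $\mathcal P_{2,q}=\{(x,x^q,x^{q^2}):x\in\mathbb{F}_{q^3}^*\}$. A point has Type I, II, III according as its $\phi$-orbit is one point, three collinear points, three non-collinear points; a line has Type I, II, III according as its $\phi$-orbit is one line, three concurrent lines, three non-concurrent lines. Let $\psi_t:(x,y,z)\mapsto(tx,t^qy,t^{q^2}z)$ for $t\in\mathbb{F}_{q^3}^*$, $\mathsf S_T=\{\psi_t\}$, and $\mathrm{orb}(\mathsf S_T)$ the set of point orbits of $\mathsf S_T$. *)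

theory Defs
  imports "HOL-Computational_Algebra.Primes"
begin

type_synonym 'a vec3 = "'a \<times> 'a \<times> 'a"

definition smul3 :: "'a::field \<Rightarrow> 'a vec3 \<Rightarrow> 'a vec3" where
  "smul3 c v = (case v of (x,y,z) \<Rightarrow> (c*x, c*y, c*z))"

definition pclass :: "'a::field vec3 \<Rightarrow> 'a vec3 set" where
  "pclass v = {smul3 c v | c. c \<noteq> 0}"

definition pg_points :: "'a::field vec3 set set" where
  "pg_points = {pclass v | v. v \<noteq> (0,0,0)}"

text \<open>Lines are represented by classes of coordinate triples [a,b,c] as well.\<close>
definition pg_lines :: "'a::field vec3 set set" where
  "pg_lines = {pclass v | v. v \<noteq> (0,0,0)}"

definition dot3 :: "'a::field vec3 \<Rightarrow> 'a vec3 \<Rightarrow> 'a" where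
  "dot3 w v = (case w of (a,b,c) \<Rightarrow> case v of (x,y,z) \<Rightarrow> a*x + b*y + c*z)"

definition incident :: "'a::field vec3 set \<Rightarrow> 'a vec3 set \<Rightarrow> bool" where
  "incident P L \<longleftrightarrow> (\<exists>v\<in>P. \<exists>w\<in>L. dot3 w v = 0)"

definition collinear3 :: "'a::field vec3 set \<Rightarrow> 'a vec3 set \<Rightarrow> 'a vec3 set \<Rightarrow> bool" where
  "collinear3 P Q R \<longleftrightarrow> (\<exists>L\<in>pg_lines. incident P L \<and> incident Q L \<and> incident R L)"

definition concurrent3 :: "'a::field vec3 set \<Rightarrow> 'a vec3 set \<Rightarrow> 'a vec3 set \<Rightarrow> bool" where
  "concurrent3 L M N \<longleftrightarrow> (\<exists>P\<in>pg_points. incident P L \<and> incident P M \<and> incident P N)"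

definition on_line :: "'a::field vec3 set set \<Rightarrow> 'a vec3 set \<Rightarrow> 'a vec3 set set" where
  "on_line B L = {P\<in>B. incident P L}"

definition sec_lines :: "'a::field vec3 set set \<Rightarrow> 'a vec3 set set" where
  "sec_lines B = {L\<in>pg_lines. \<exists>P\<in>B. \<exists>Q\<in>B. P \<noteq> Q \<and> incident P L \<and> incident Q L}"

text \<open>Subplane of order q (an F_q-plane): B together with the lines meeting
  it in at least two points forms a projective plane of order q under the
  inherited incidence.\<close>
definition is_subplane :: "nat \<Rightarrow> 'a::field vec3 set set \<Rightarrow> bool" where
  "is_subplane q B \<longleftrightarrow> B \<subseteq> pg_points
     \<and> (\<forall>L\<in>sec_lines B. finite (on_line B L) \<and> card (on_line B L) = q + 1)
     \<and> (\<forall>L\<in>sec_lines B. \<forall>M\<in>sec_lines B. L \<noteq> M \<longrightarrow> (\<exists>P\<in>B. incident P L \<and> incident P M))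
     \<and> (\<exists>P1\<in>B. \<exists>P2\<in>B. \<exists>P3\<in>B. \<exists>P4\<in>B. distinct [P1,P2,P3,P4]
          \<and> \<not> collinear3 P1 P2 P3 \<and> \<not> collinear3 P1 P2 P4
          \<and> \<not> collinear3 P1 P3 P4 \<and> \<not> collinear3 P2 P3 P4)"

definition plane_lines :: "nat \<Rightarrow> 'a::field vec3 set set \<Rightarrow> 'a vec3 set set" where
  "plane_lines q B = {L\<in>pg_lines. finite (on_line B L) \<and> card (on_line B L) = q + 1}"

text \<open>The collineation phi: (x,y,z) -> (z^q,x^q,y^q); on lines [d,e,f] -> [f^q,d^q,e^q]
  (same formula).\<close>
definition phi_vec :: "nat \<Rightarrow> 'a::field vec3 \<Rightarrow> 'a vec3" where
  "phi_vec q v = (case v of (x,y,z) \<Rightarrow> (z^q, x^q, y^q))"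

definition phi :: "nat \<Rightarrow> 'a::field vec3 set \<Rightarrow> 'a vec3 set" where
  "phi q P = phi_vec q ` P"

definition point_type_III :: "nat \<Rightarrow> 'a::field vec3 set \<Rightarrow> bool" where
  "point_type_III q P \<longleftrightarrow> \<not> collinear3 P (phi q P) (phi q (phi q P))"

definition line_type_III :: "nat \<Rightarrow> 'a::field vec3 set \<Rightarrow> bool" where
  "line_type_III q L \<longleftrightarrow> \<not> concurrent3 L (phi q L) (phi q (phi q L))"

definition psi_vec :: "nat \<Rightarrow> 'a::field \<Rightarrow> 'a vec3 \<Rightarrow> 'a vec3" where
  "psi_vec q t v = (case v of (x,y,z) \<Rightarrow> (t*x, t^q*y, t^(q^2)*z))"

definition ST_orbit :: "nat \<Rightarrow> 'a::field vec3 set \<Rightarrow> 'a vec3 set set" where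
  "ST_orbit q P = {psi_vec q t ` P | t. t \<noteq> 0}"

definition orb_ST :: "nat \<Rightarrow> 'a::field vec3 set set set" where
  "orb_ST q = {ST_orbit q P | P. P \<in> pg_points}"

definition pi_lambda :: "nat \<Rightarrow> 'a::field \<Rightarrow> 'a vec3 set set" where
  "pi_lambda q l = {pclass (x, x^q, l * x^(q^2)) | x. x \<noteq> 0}"

end

theory Submission
  imports Defs "HOL-Computational_Algebra.Polynomial"
begin

lemma field_pow_card:
  fixes x :: "'a::{finite,field}"
  shows "x ^ card (UNIV :: 'a set) = x"
proof (cases "x = 0")
  case False
  have "x * (\<Prod>y\<in>UNIV-{0}. x * y) = x * x ^ (card (UNIV :: 'a set) - 1) * \<Prod>(UNIV-{0})"
    by (simp add: prod.distrib mult_ac)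
  also have "x * x ^ (card (UNIV :: 'a set) - 1) = x ^ Suc (card (UNIV :: 'a set) - 1)"
    by (subst power_Suc) auto
  also have "Suc (card (UNIV :: 'a set) - 1) = card (UNIV :: 'a set)"
    using finite_UNIV_card_ge_0[where ?'a = 'a] by simp
  also have "(\<Prod>y\<in>UNIV-{0}. x * y) = (\<Prod>y\<in>UNIV-{0}. y)"
    by (rule prod.reindex_bij_witness[of _ "\<lambda>y. y / x" "\<lambda>y. x * y"]) (use False in auto)
  finally show ?thesis
    by simp
qed (use finite_UNIV_card_ge_0[where ?'a = 'a] in auto)

lemma roots_pow_le:
  fixes c :: "'a::field"
  assumes "n > 0"
  shows "card {x::'a. x ^ n = c} \<le> n"
proof -
  define p where "p = monom (1::'a) n - [:c:]"
  have ev: "poly p x = x ^ n - c" for x by (simp add: p_def poly_monom)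
  have "coeff p n = 1" using assms by (cases n) (auto simp: p_def)
  hence p0: "p \<noteq> 0" by auto
  have "degree p \<le> n" unfolding p_def
    using degree_diff_le_max[of "monom (1::'a) n" "[:c:]"] degree_monom_le[of "1::'a" n] by auto
  moreover have "{x. x ^ n = c} = {x. poly p x = 0}" by (auto simp: ev)
  ultimately show ?thesis using card_poly_roots_bound[OF p0] by auto
qed

lemma pow_hom_count:
  fixes n :: nat
  assumes "n > 0"
  shows "card (UNIV - {0::'a::{finite,field}}) = card ((\<lambda>x. x ^ n) ` (UNIV - {0::'a})) * card {x::'a. x ^ n = 1}"
proof -
  define S where "S = UNIV - {0::'a}"
  define K where "K = {x::'a. x ^ n = 1}"
  define I where "I = (\<lambda>x. x ^ n) ` S"
  define fib where "fib y = {x\<in>S. x ^ n = y}" for y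
  have S_eq: "S = (\<Union>y\<in>I. fib y)" by (auto simp: I_def fib_def)
  have cf: "card (fib y) = card K" if yI: "y \<in> I" for y
  proof -
    obtain x0 where x0: "x0 \<in> S" "y = x0 ^ n" using yI unfolding I_def by blast
    have "fib y = (\<lambda>k. x0 * k) ` K"
    proof (intro set_eqI iffI)
      fix x assume "x \<in> fib y"
      hence xS: "x \<in> S" and xy: "x ^ n = y" by (auto simp: fib_def)
      have "x = x0 * (x / x0)" using x0 by (simp add: S_def)
      moreover have "(x / x0) ^ n = 1" using x0 xS xy by (simp add: S_def power_divide)
      ultimately show "x \<in> (\<lambda>k. x0 * k) ` K" unfolding K_def by blast
    next
      fix x assume "x \<in> (\<lambda>k. x0 * k) ` K"
      then obtain k where k: "k ^ n = 1" "x = x0 * k" by (auto simp: K_def)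
      have "k \<noteq> 0" using assms k(1) by (cases n) auto
      hence "x \<in> S" using x0 k by (auto simp: S_def)
      moreover have "x ^ n = y" using x0 k by (simp add: power_mult_distrib)
      ultimately show "x \<in> fib y" by (simp add: fib_def)
    qed
    moreover have "inj_on (\<lambda>k. x0 * k) K" using x0 by (auto simp: inj_on_def S_def)
    ultimately show ?thesis by (simp add: card_image)
  qed
  have "card S = (\<Sum>y\<in>I. card (fib y))"
    unfolding S_eq by (rule card_UN_disjoint) (auto simp: fib_def)
  also have "\<dots> = card I * card K" using cf by simp
  finally show ?thesis by (simp add: S_def I_def K_def)
qed

lemma pow_count:
  fixes n m :: nat
  assumes nm: "n * m = card (UNIV :: 'a::{finite,field} set) - 1" and "n > 0" "m > 0"
  shows "card {x::'a. x ^ n = 1} = n"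
    and "(\<lambda>x. x ^ n) ` (UNIV - {0::'a}) = {y::'a. y ^ m = 1}"
proof -
  define Q where "Q = card (UNIV :: 'a set)"
  have Q1: "Q \<ge> 1" unfolding Q_def by (simp add: Suc_leI finite_UNIV_card_ge_0)
  have sub: "(\<lambda>x. x ^ n) ` (UNIV - {0::'a}) \<subseteq> {y::'a. y ^ m = 1}"
  proof clarify
    fix x :: 'a assume "x \<noteq> 0"
    have "x * x ^ (Q - 1) = x ^ Q" using Q1 by (cases Q) auto
    hence "x * x ^ (Q - 1) = x * 1" using field_pow_card[of x] by (simp add: Q_def)
    hence "x ^ (Q - 1) = 1" using \<open>x \<noteq> 0\<close> by simp
    thus "(x ^ n) ^ m = 1" using nm by (simp add: Q_def flip: power_mult)
  qed
  have cS: "card (UNIV - {0::'a}) = Q - 1" by (simp add: Q_def card_Diff_singleton)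
  have c1: "card {x::'a. x ^ n = 1} \<le> n" using roots_pow_le assms by blast
  have c2: "card {y::'a. y ^ m = 1} \<le> m" using roots_pow_le assms by blast
  have c3: "card ((\<lambda>x. x ^ n) ` (UNIV - {0::'a})) \<le> card {y::'a. y ^ m = 1}"
    by (rule card_mono[OF _ sub]) simp
  have eq: "n * m = card ((\<lambda>x. x ^ n) ` (UNIV - {0::'a})) * card {x::'a. x ^ n = 1}"
    using pow_hom_count[OF \<open>n>0\<close>, where 'a='a] cS nm by (simp add: Q_def)
  have Im: "card ((\<lambda>x. x ^ n) ` (UNIV - {0::'a})) \<le> m" using c2 c3 by linarith
  moreover have "card {x::'a. x ^ n = 1} \<le> n" by (fact c1)
  ultimately have A: "card {x::'a. x ^ n = 1} = n \<and> card ((\<lambda>x. x ^ n) ` (UNIV - {0::'a})) = m"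
  proof -
    define I where "I = card ((\<lambda>x. x ^ n) ` (UNIV - {0::'a}))"
    define K where "K = card {x::'a. x ^ n = 1}"
    have h: "I \<le> m" "K \<le> n" "n * m = I * K"
      using Im c1 eq unfolding I_def K_def by auto
    have "I * K \<le> m * K" using h by simp
    hence "m * n \<le> m * K" using h(3) by (simp add: mult.commute)
    moreover have "m * K \<le> m * n" using h by simp
    ultimately have "m * K = m * n" by (rule le_antisym[rotated])
    hence "K = n" using \<open>m>0\<close> by simp
    moreover from this h have "I = m" using \<open>n>0\<close> by (simp add: mult.commute)
    ultimately show ?thesis unfolding I_def K_def by simp
  qed
  thus "card {x::'a. x ^ n = 1} = n" by simp
  show "(\<lambda>x. x ^ n) ` (UNIV - {0::'a}) = {y::'a. y ^ m = 1}"
    by (rule card_subset_eq) (use sub A c2 c3 in auto)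
qed

lemma of_nat_card_field: "of_nat (card (UNIV :: 'a::{finite,field} set)) = (0::'a)"
proof -
  have "(\<Sum>x\<in>(UNIV::'a set). x + 1) = (\<Sum>x\<in>UNIV. x)"
    by (rule sum.reindex_bij_witness[of _ "\<lambda>y. y - 1" "\<lambda>y. y + 1"]) auto
  thus ?thesis by (simp add: sum.distrib)
qed

lemma char_is_p:
  assumes "prime p" "k > 0" "card (UNIV :: 'a::{finite,field} set) = p ^ k"
  shows "CHAR('a) = p"
proof -
  have "CHAR('a) dvd p ^ k" using of_nat_card_field[where 'a='a] assms(3)
    by (metis of_nat_eq_0_iff_char_dvd)
  moreover have pc: "prime CHAR('a)"
    using finite_imp_CHAR_pos[where 'a='a] prime_CHAR_semidom by auto
  ultimately have "CHAR('a) dvd p" using prime_dvd_power by blast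
  thus ?thesis using pc assms(1) by (simp add: primes_dvd_imp_eq)
qed


locale ffq =
  fixes q :: nat and F :: "'a::{finite,field} \<Rightarrow> 'a"
  assumes q1: "q > 1" and card_UNIV: "card (UNIV::'a set) = q ^ 3"
    and F_def: "F x = x ^ q" and F_add: "F (x + y) = F x + F y"
begin

lemma F_mult: "F (x * y) = F x * F y" by (simp add: F_def power_mult_distrib)
lemma F_0[simp]: "F 0 = 0" using q1 by (simp add: F_def)
lemma F_1[simp]: "F 1 = 1" by (simp add: F_def)
lemma F3[simp]: "F (F (F x)) = x"
proof -
  have "F (F (F x)) = x ^ (q * q * q)" by (simp add: F_def power_mult)
  also have "q * q * q = card (UNIV::'a set)" by (simp add: card_UNIV power3_eq_cube)
  finally show ?thesis using field_pow_card by simp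
qed
lemma F_inj: "F x = F y \<Longrightarrow> x = y" by (metis F3)
lemma F_eq_iff[simp]: "F x = F y \<longleftrightarrow> x = y" using F_inj by blast
lemma F_eq0[simp]: "F x = 0 \<longleftrightarrow> x = 0" using F_eq_iff[of x 0] by simp
lemma F_minus: "F (- x) = - F x"
  using F_add[of x "-x"] by (simp add: add_eq_0_iff)
lemma F_diff: "F (x - y) = F x - F y" using F_add[of x "-y"] F_minus by simp
lemma F_inverse: "F (inverse x) = inverse (F x)"
proof (cases "x = 0")
  case False
  hence "F x * F (inverse x) = 1" by (simp flip: F_mult)
  thus ?thesis using False by (simp add: field_simps)
qed simp
lemma F_divide: "F (x / y) = F x / F y" by (simp add: divide_inverse F_mult F_inverse)
lemma F_power: "F (x ^ n) = F x ^ n" by (induct n) (simp_all add: F_mult)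
lemma F_surj: "\<exists>y. x = F y" by (metis F3)

lemma pow_q: "x ^ q = F x" by (simp add: F_def)
lemma pow_q2: "x ^ (q^2) = F (F x)" by (simp add: F_def power2_eq_square power_mult)

lemmas F_simps = F_mult F_minus F_diff F_divide F_inverse F_power F_add

lemma nm_q: "(q - 1) * (q^2 + q + 1) = card (UNIV::'a set) - 1"
proof -
  obtain r where r: "q = Suc r" using q1 by (cases q) auto
  have "(q - 1) * (q^2 + q + 1) = r * (r*r + 3*r + 3)" unfolding r by (simp add: power2_eq_square algebra_simps)
  moreover have "q ^ 3 - 1 = r * (r*r + 3*r + 3)" unfolding r by (simp add: power3_eq_cube algebra_simps)
  ultimately show ?thesis by (simp add: card_UNIV)
qed

definition Kq :: "'a set" where "Kq = {x. F x = x}"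

lemma card_Kq: "card Kq = q"
proof -
  note nm = nm_q
  have c: "card {x::'a. x ^ (q - 1) = 1} = q - 1" using pow_count(1)[OF nm] q1 by auto
  have "Kq = insert 0 {x::'a. x ^ (q - 1) = 1}"
  proof (rule set_eqI)
    fix x :: 'a
    have "x ^ q = x * x ^ (q - 1)" using q1 by (cases q) auto
    thus "x \<in> Kq \<longleftrightarrow> x \<in> insert 0 {x. x ^ (q - 1) = 1}"
      by (auto simp: Kq_def F_def)
  qed
  moreover have "0 \<notin> {x::'a. x ^ (q - 1) = 1}" using q1 by (simp add: power_0_left)
  ultimately show ?thesis using c q1 by simp
qed

lemma Kq_mem: "c \<in> Kq \<longleftrightarrow> F c = c" by (simp add: Kq_def)

definition N :: "'a \<Rightarrow> 'a" where "N c = c * F c * F (F c)"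

lemma hilbert90:
  assumes "N c = 1"
  shows "\<exists>s. s \<noteq> 0 \<and> F s = c * s"
proof -
  note nm = nm_q
  have "c ^ (q^2 + q + 1) = N c" by (simp add: N_def power_add pow_q pow_q2 mult_ac)
  hence "c \<in> {y. y ^ (q^2 + q + 1) = 1}" using assms by simp
  hence "c \<in> (\<lambda>x. x ^ (q - 1)) ` (UNIV - {0})" using pow_count(2)[OF nm] q1 by auto
  then obtain s where s: "s \<noteq> 0" "c = s ^ (q - 1)" by auto
  have "F s = s * s ^ (q - 1)" using q1 by (cases q) (auto simp: F_def)
  thus ?thesis using s by (auto simp: mult_ac)
qed

lemma card_cuberoots: "card {l::'a. F l = l \<and> l ^ 3 = 1} = gcd 3 (q - 1)"
proof (cases "3 dvd (q - 1)")
  case True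
  hence g: "gcd 3 (q - 1) = 3" by (simp add: gcd_nat.absorb1)
  have "{l::'a. F l = l \<and> l ^ 3 = 1} = {l. l ^ 3 = 1}"
  proof (rule set_eqI, rule iffI)
    fix l :: 'a assume "l \<in> {l. l ^ 3 = 1}"
    hence l3: "l ^ 3 = 1" by simp
    obtain k where k: "q - 1 = 3 * k" using True by auto
    have "l ^ q = l * l ^ (q - 1)" using q1 by (cases q) auto
    also have "l ^ (q - 1) = 1" using k l3 by (simp add: power_mult)
    finally show "l \<in> {l. F l = l \<and> l ^ 3 = 1}" using l3 by (simp add: F_def)
  qed simp
  moreover have "card {l::'a. l ^ 3 = 1} = 3"
  proof -
    obtain k where k: "q - 1 = 3 * k" using True by auto
    have "3 * (k * (q^2 + q + 1)) = card (UNIV::'a set) - 1"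
      using nm_q k by (simp add: mult.assoc)
    moreover have "k > 0" using k q1 by (cases k) auto
    ultimately show ?thesis using pow_count(1)[of 3 "k * (q^2 + q + 1)", where 'a='a] by simp
  qed
  ultimately show ?thesis using g by simp
next
  case False
  have p3: "prime (3::nat)"
  proof -
    have "{2..<3::nat} = {2}" by auto
    thus ?thesis by (simp add: prime_nat_iff')
  qed
  hence g: "gcd 3 (q - 1) = 1"
    using False prime_imp_coprime coprime_iff_gcd_eq_1 by blast
  have "{l::'a. F l = l \<and> l ^ 3 = 1} = {1}"
  proof (rule set_eqI, rule iffI)
    fix l :: 'a assume "l \<in> {l. F l = l \<and> l ^ 3 = 1}"
    hence l: "l ^ q = l" "l ^ 3 = 1" by (auto simp: F_def)
    have l0: "l \<noteq> 0" using l by auto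
    have lq: "l ^ (q - 1) = 1"
    proof -
      have "l * l ^ (q - 1) = l * 1" using l q1 by (cases q) auto
      thus ?thesis using l0 by simp
    qed
    have "(q - 1) mod 3 < 3" by simp
    moreover have "(q - 1) mod 3 \<noteq> 0" using False by (simp add: dvd_eq_mod_eq_0)
    ultimately have "(q - 1) mod 3 = 1 \<or> (q - 1) mod 3 = 2" by arith
    moreover have "l ^ (q - 1) = l ^ ((q - 1) mod 3)"
    proof -
      have gen: "l ^ (3 * d + r) = (l ^ 3) ^ d * l ^ r" for d r by (simp add: power_add power_mult)
      have "q - 1 = 3 * ((q - 1) div 3) + (q - 1) mod 3" by simp
      hence "l ^ (q - 1) = (l ^ 3) ^ ((q - 1) div 3) * l ^ ((q - 1) mod 3)" using gen by metis
      thus ?thesis using l(2) by simp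
    qed
    ultimately have "l = 1 \<or> l ^ 2 = 1" using lq by auto
    thus "l \<in> {1}"
    proof
      assume "l ^ 2 = 1"
      hence "l ^ 3 = l" by (simp add: power_numeral_reduce)
      thus ?thesis using l by simp
    qed simp
  qed simp
  thus ?thesis using g by simp
qed

end

lemma smul3_simp[simp]: "smul3 c (x,y,z) = (c*x, c*y, c*z)" by (simp add: smul3_def)
lemma dot3_simp[simp]: "dot3 (a,b,c) (x,y,z) = a*x + b*y + c*z" by (simp add: dot3_def)

lemma mem_pclass: "u \<in> pclass v \<longleftrightarrow> (\<exists>c. c \<noteq> 0 \<and> u = smul3 c v)"
  by (auto simp: pclass_def)

lemma smul3_1[simp]: "smul3 1 v = v" by (cases v) auto
lemma smul3_smul3[simp]: "smul3 c (smul3 d v) = smul3 (c*d) v" by (cases v) auto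

lemma self_in_pclass[simp]: "v \<in> pclass v"
  unfolding mem_pclass by (rule exI[of _ 1]) simp

lemma pclass_smul: "c \<noteq> 0 \<Longrightarrow> pclass (smul3 c v) = pclass v"
proof (rule set_eqI)
  fix u assume c: "c \<noteq> 0"
  show "u \<in> pclass (smul3 c v) \<longleftrightarrow> u \<in> pclass v"
  proof
    assume "u \<in> pclass (smul3 c v)"
    then obtain d where "d \<noteq> 0" "u = smul3 (d*c) v" by (auto simp: mem_pclass)
    thus "u \<in> pclass v" using c unfolding mem_pclass by (intro exI[of _ "d*c"]) simp
  next
    assume "u \<in> pclass v"
    then obtain d where d: "d \<noteq> 0" "u = smul3 d v" by (auto simp: mem_pclass)
    hence "u = smul3 (d / c) (smul3 c v)" using c by simp
    thus "u \<in> pclass (smul3 c v)" using c d unfolding mem_pclass by (metis divide_eq_0_iff)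
  qed
qed

lemma pclass_eq_iff: "pclass v = pclass w \<longleftrightarrow> (\<exists>c. c \<noteq> 0 \<and> w = smul3 c v)"
proof
  assume "pclass v = pclass w"
  hence "w \<in> pclass v" using self_in_pclass[of w] by simp
  thus "\<exists>c. c \<noteq> 0 \<and> w = smul3 c v" by (simp add: mem_pclass)
next
  assume "\<exists>c. c \<noteq> 0 \<and> w = smul3 c v"
  thus "pclass v = pclass w" using pclass_smul by metis
qed

lemma dot3_smul: "dot3 (smul3 d w) (smul3 c v) = d * c * dot3 w v"
  by (cases w; cases v) (simp add: algebra_simps)

lemma incident_pclass: "incident (pclass v) (pclass w) \<longleftrightarrow> dot3 w v = 0"
proof
  assume "incident (pclass v) (pclass w)"
  then obtain v' w' where "v' \<in> pclass v" "w' \<in> pclass w" "dot3 w' v' = 0"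
    by (auto simp: incident_def)
  thus "dot3 w v = 0" by (auto simp: mem_pclass dot3_smul)
next
  assume "dot3 w v = 0"
  thus "incident (pclass v) (pclass w)" unfolding incident_def using self_in_pclass by blast
qed

lemma pg_points_iff: "P \<in> pg_points \<longleftrightarrow> (\<exists>v. v \<noteq> (0,0,0) \<and> P = pclass v)"
  by (auto simp: pg_points_def)
lemma pg_lines_iff: "L \<in> pg_lines \<longleftrightarrow> (\<exists>v. v \<noteq> (0,0,0) \<and> L = pclass v)"
  by (auto simp: pg_lines_def)

context ffq
begin

lemma Kq_0[simp]: "0 \<in> Kq" and Kq_1[simp]: "1 \<in> Kq" by (auto simp: Kq_def)
lemma Kq_add[intro]: "a \<in> Kq \<Longrightarrow> b \<in> Kq \<Longrightarrow> a + b \<in> Kq" by (simp add: Kq_def F_add)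
lemma Kq_mult[intro]: "a \<in> Kq \<Longrightarrow> b \<in> Kq \<Longrightarrow> a * b \<in> Kq" by (simp add: Kq_def F_mult)
lemma Kq_diff[intro]: "a \<in> Kq \<Longrightarrow> b \<in> Kq \<Longrightarrow> a - b \<in> Kq" by (simp add: Kq_def F_diff)
lemma Kq_minus[intro]: "a \<in> Kq \<Longrightarrow> - a \<in> Kq" by (simp add: Kq_def F_minus)
lemma Kq_divide[intro]: "a \<in> Kq \<Longrightarrow> b \<in> Kq \<Longrightarrow> a / b \<in> Kq" by (simp add: Kq_def F_divide)

definition ptl :: "'a \<Rightarrow> 'a \<Rightarrow> 'a vec3 set" where
  "ptl l x = pclass (x, F x, l * F (F x))"

definition T :: "'a \<Rightarrow> 'a vec3 \<Rightarrow> 'a \<Rightarrow> 'a" where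
  "T l w x = dot3 w (x, F x, l * F (F x))"

lemma pi_lambda_eq: "pi_lambda q l = {ptl l x | x. x \<noteq> 0}"
  by (simp add: pi_lambda_def ptl_def pow_q pow_q2)

lemma T_add: "T l w (x + y) = T l w x + T l w y"
  by (cases w) (simp add: T_def F_add algebra_simps)
lemma T_smul: "c \<in> Kq \<Longrightarrow> T l w (c * x) = c * T l w x"
  by (cases w) (simp add: T_def F_mult Kq_def algebra_simps)
lemma T_0[simp]: "T l w 0 = 0" by (cases w) (simp add: T_def)
lemma T_lin2: "c1 \<in> Kq \<Longrightarrow> c2 \<in> Kq \<Longrightarrow> T l w (c1 * a + c2 * b) = c1 * T l w a + c2 * T l w b"
  by (simp add: T_add T_smul)
lemma T_lin3: "c1 \<in> Kq \<Longrightarrow> c2 \<in> Kq \<Longrightarrow> c3 \<in> Kq \<Longrightarrow>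
   T l w (c1 * a + c2 * b + c3 * c) = c1 * T l w a + c2 * T l w b + c3 * T l w c"
  by (simp add: T_add T_smul)

lemma incident_ptl: "incident (ptl l x) (pclass w) \<longleftrightarrow> T l w x = 0"
  by (simp add: ptl_def T_def incident_pclass)

lemma ptl_in_pg: "x \<noteq> 0 \<Longrightarrow> ptl l x \<in> pg_points"
  unfolding ptl_def pg_points_iff by auto

lemma ptl_eq_iff:
  assumes "x \<noteq> 0"
  shows "ptl l x = ptl l y \<longleftrightarrow> (\<exists>c\<in>Kq. c \<noteq> 0 \<and> y = c * x)"
proof
  assume "ptl l x = ptl l y"
  then obtain c where c: "c \<noteq> 0" "(y, F y, l * F (F y)) = smul3 c (x, F x, l * F (F x))"
    by (auto simp: ptl_def pclass_eq_iff)
  hence y: "y = c * x" "F y = c * F x" by auto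
  hence "F c * F x = c * F x" by (simp add: F_mult)
  hence "F c = c" using assms by simp
  thus "\<exists>c\<in>Kq. c \<noteq> 0 \<and> y = c * x" using c y by (auto simp: Kq_def)
next
  assume "\<exists>c\<in>Kq. c \<noteq> 0 \<and> y = c * x"
  then obtain c where c: "F c = c" "c \<noteq> 0" "y = c * x" by (auto simp: Kq_def)
  hence "(y, F y, l * F (F y)) = smul3 c (x, F x, l * F (F x))" by (simp add: F_mult)
  thus "ptl l x = ptl l y" using c by (auto simp: ptl_def pclass_eq_iff)
qed

lemma T_nonzero:
  assumes "w \<noteq> (0,0,0)" "l \<noteq> 0"
  shows "\<exists>x. T l w x \<noteq> 0"
proof -
  obtain d e f where w: "w = (d, e, f)" by (cases w)
  define p where "p = monom d 1 + monom e q + monom (f * l) (q^2)"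
  have ev: "T l w x = poly p x" for x
    by (simp add: p_def w T_def poly_monom pow_q pow_q2 algebra_simps)
  have q2: "q^2 > q" "q > 1" using q1 by (auto simp: power2_eq_square)
  have "coeff p 1 = d" "coeff p q = e" "coeff p (q^2) = f * l"
    using q2 by (auto simp: p_def coeff_monom)
  hence p0: "p \<noteq> 0" using assms w by auto
  have d1: "degree (monom d 1) \<le> q^2" using degree_monom_le[of d 1] q2 by linarith
  have d2: "degree (monom e q) \<le> q^2" using degree_monom_le[of e q] q2 by linarith
  have d3: "degree (monom (f * l) (q^2)) \<le> q^2" using degree_monom_le[of "f * l" "q^2"] by linarith
  have "degree p \<le> q^2" unfolding p_def by (intro degree_add_le d1 d2 d3)
  hence "card {x. poly p x = 0} \<le> q^2" using card_poly_roots_bound[OF p0] by linarith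
  moreover have "q^2 < card (UNIV::'a set)" using q1 by (simp add: card_UNIV power2_eq_square power3_eq_cube)
  ultimately have "{x. poly p x = 0} \<noteq> UNIV" by auto
  thus ?thesis using ev by auto
qed

definition span2 :: "'a \<Rightarrow> 'a \<Rightarrow> 'a set" where
  "span2 a b = {c1 * a + c2 * b | c1 c2. c1 \<in> Kq \<and> c2 \<in> Kq}"
definition ind2 :: "'a \<Rightarrow> 'a \<Rightarrow> bool" where
  "ind2 a b \<longleftrightarrow> (\<forall>c1\<in>Kq. \<forall>c2\<in>Kq. c1 * a + c2 * b = 0 \<longrightarrow> c1 = 0 \<and> c2 = 0)"
definition ind3 :: "'a \<Rightarrow> 'a \<Rightarrow> 'a \<Rightarrow> bool" where
  "ind3 a b c \<longleftrightarrow> (\<forall>c1\<in>Kq. \<forall>c2\<in>Kq. \<forall>c3\<in>Kq. c1 * a + c2 * b + c3 * c = 0 \<longrightarrow> c1 = 0 \<and> c2 = 0 \<and> c3 = 0)"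

lemma finite_Kq[simp]: "finite Kq" by simp

lemma ind3_span:
  assumes "ind3 a b c"
  shows "\<exists>c1\<in>Kq. \<exists>c2\<in>Kq. \<exists>c3\<in>Kq. z = c1 * a + c2 * b + c3 * c"
proof -
  define g where "g = (\<lambda>(c1, c2, c3). c1 * a + c2 * b + c3 * c)"
  have inj: "inj_on g (Kq \<times> Kq \<times> Kq)"
  proof (rule inj_onI)
    fix u v assume u: "u \<in> Kq \<times> Kq \<times> Kq" and v: "v \<in> Kq \<times> Kq \<times> Kq" and eq: "g u = g v"
    obtain c1 c2 c3 where uu: "u = (c1, c2, c3)" by (cases u)
    obtain d1 d2 d3 where vv: "v = (d1, d2, d3)" by (cases v)
    have m: "c1 \<in> Kq" "c2 \<in> Kq" "c3 \<in> Kq" "d1 \<in> Kq" "d2 \<in> Kq" "d3 \<in> Kq" using u v uu vv by auto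
    have "(c1 - d1) * a + (c2 - d2) * b + (c3 - d3) * c = 0" using eq uu vv by (simp add: g_def algebra_simps)
    moreover have "c1 - d1 \<in> Kq" "c2 - d2 \<in> Kq" "c3 - d3 \<in> Kq" using m by auto
    ultimately have "c1 - d1 = 0 \<and> c2 - d2 = 0 \<and> c3 - d3 = 0" using assms unfolding ind3_def by blast
    thus "u = v" using uu vv by simp
  qed
  have "card (g ` (Kq \<times> Kq \<times> Kq)) = q ^ 3"
    using card_image[OF inj] by (simp add: card_cartesian_product card_Kq power3_eq_cube)
  hence "g ` (Kq \<times> Kq \<times> Kq) = UNIV"
    by (metis card_UNIV card_subset_eq finite subset_UNIV)
  hence "z \<in> g ` (Kq \<times> Kq \<times> Kq)" by simp
  thus ?thesis by (auto simp: g_def)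
qed

lemma ind2_ind3:
  assumes "ind2 a b" "z \<notin> span2 a b"
  shows "ind3 a b z"
  unfolding ind3_def
proof (intro ballI impI)
  fix c1 c2 c3 assume m: "c1 \<in> Kq" "c2 \<in> Kq" "c3 \<in> Kq" and eq: "c1 * a + c2 * b + c3 * z = 0"
  show "c1 = 0 \<and> c2 = 0 \<and> c3 = 0"
  proof (cases "c3 = 0")
    case True
    thus ?thesis using assms(1) m eq unfolding ind2_def by auto
  next
    case False
    hence "z = (- c1 / c3) * a + (- c2 / c3) * b" using eq
      by (simp add: field_simps) (metis add.commute add_eq_0_iff mult.commute)
    moreover have "- c1 / c3 \<in> Kq" "- c2 / c3 \<in> Kq" using m by auto
    ultimately have "z \<in> span2 a b" unfolding span2_def by blast
    thus ?thesis using assms(2) by simp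
  qed
qed

lemma ind2_nz: "ind2 a b \<Longrightarrow> a \<noteq> 0 \<and> b \<noteq> 0"
  unfolding ind2_def by (metis Kq_0 Kq_1 add_0 mult_1 mult_zero_left one_neq_zero)

lemma ind2_of_ptl:
  assumes "x \<noteq> 0" "y \<noteq> 0" "ptl l x \<noteq> ptl l y"
  shows "ind2 x y"
  unfolding ind2_def
proof (intro ballI impI)
  fix c1 c2 assume m: "c1 \<in> Kq" "c2 \<in> Kq" and eq: "c1 * x + c2 * y = 0"
  show "c1 = 0 \<and> c2 = 0"
  proof (cases "c2 = 0")
    case True thus ?thesis using eq assms by auto
  next
    case False
    hence y: "y = (- c1 / c2) * x" using eq by (simp add: field_simps) (metis add.commute add_eq_0_iff mult.commute)
    hence "- c1 / c2 \<noteq> 0" using assms by auto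
    moreover have "- c1 / c2 \<in> Kq" using m by auto
    ultimately have "ptl l x = ptl l y" using y ptl_eq_iff[OF assms(1)] by blast
    thus ?thesis using assms by simp
  qed
qed

lemma ptl_neq_of_ind2:
  assumes "ind2 x y"
  shows "ptl l x \<noteq> ptl l y"
proof
  assume "ptl l x = ptl l y"
  moreover have "x \<noteq> 0" using ind2_nz[OF assms] by simp
  ultimately obtain c where c: "c \<in> Kq" "c \<noteq> 0" "y = c * x" using ptl_eq_iff by blast
  hence "c * x + (-1) * y = 0" by simp
  thus False using assms c unfolding ind2_def by (metis Kq_1 Kq_minus neg_equal_0_iff_equal one_neq_zero)
qed

end

context ffq
begin

lemma mem_pi: "P \<in> pi_lambda q l \<longleftrightarrow> (\<exists>x. x \<noteq> 0 \<and> P = ptl l x)"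
  by (auto simp: pi_lambda_eq)

lemma span2_T:
  assumes "z \<in> span2 x1 x2" "T l w x1 = 0" "T l w x2 = 0"
  shows "T l w z = 0"
  using assms by (auto simp: span2_def T_lin2)

lemma zeros_span:
  assumes w: "w \<noteq> (0,0,0)" and l: "l \<noteq> 0" and i: "ind2 x1 x2"
    and t: "T l w x1 = 0" "T l w x2 = 0" "T l w z = 0"
  shows "z \<in> span2 x1 x2"
proof (rule ccontr)
  assume "z \<notin> span2 x1 x2"
  hence i3: "ind3 x1 x2 z" using ind2_ind3 i by blast
  have "T l w y = 0" for y
  proof -
    obtain c1 c2 c3 where c: "c1 \<in> Kq" "c2 \<in> Kq" "c3 \<in> Kq" "y = c1 * x1 + c2 * x2 + c3 * z"
      using ind3_span[OF i3] by blast
    thus ?thesis using t by (simp add: T_lin3)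
  qed
  thus False using T_nonzero[OF w l] by blast
qed

lemma ind3_not_collinear:
  assumes l: "l \<noteq> 0" and i: "ind3 a b c"
  shows "\<not> collinear3 (ptl l a) (ptl l b) (ptl l c)"
proof
  assume "collinear3 (ptl l a) (ptl l b) (ptl l c)"
  then obtain L where L: "L \<in> pg_lines" "incident (ptl l a) L" "incident (ptl l b) L" "incident (ptl l c) L"
    by (auto simp: collinear3_def)
  then obtain w where w: "w \<noteq> (0,0,0)" "L = pclass w" by (auto simp: pg_lines_iff)
  have t: "T l w a = 0" "T l w b = 0" "T l w c = 0" using L w(2) by (simp_all add: incident_ptl)
  have "T l w y = 0" for y
  proof -
    obtain c1 c2 c3 where c: "c1 \<in> Kq" "c2 \<in> Kq" "c3 \<in> Kq" "y = c1 * a + c2 * b + c3 * c"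
      using ind3_span[OF i] by blast
    thus ?thesis using t by (simp add: T_lin3)
  qed
  thus False using T_nonzero[OF w(1) l] by blast
qed

lemma sec_line_data:
  assumes "L \<in> sec_lines (pi_lambda q l)"
  obtains w x1 x2 where "w \<noteq> (0,0,0)" "L = pclass w" "ind2 x1 x2" "T l w x1 = 0" "T l w x2 = 0"
proof -
  obtain w where w: "w \<noteq> (0,0,0)" "L = pclass w" using assms by (auto simp: sec_lines_def pg_lines_iff)
  obtain P Q where PQ: "P \<in> pi_lambda q l" "Q \<in> pi_lambda q l" "P \<noteq> Q" "incident P L" "incident Q L"
    using assms by (auto simp: sec_lines_def)
  obtain x1 x2 where x: "x1 \<noteq> 0" "x2 \<noteq> 0" "P = ptl l x1" "Q = ptl l x2" using PQ(1,2) by (auto simp: mem_pi)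
  have "ind2 x1 x2" using ind2_of_ptl x PQ(3) by blast
  moreover have "T l w x1 = 0" "T l w x2 = 0" using PQ(4,5) x w by (auto simp: incident_ptl)
  ultimately show ?thesis using that w by blast
qed

lemma on_line_card:
  assumes l: "l \<noteq> 0" and w: "w \<noteq> (0,0,0)" and i: "ind2 x1 x2" and t: "T l w x1 = 0" "T l w x2 = 0"
  shows "card (on_line (pi_lambda q l) (pclass w)) = q + 1"
proof -
  define A where "A = (\<lambda>c. x1 + c * x2) ` Kq"
  have nz: "x1 \<noteq> 0" "x2 \<noteq> 0" using ind2_nz[OF i] by auto
  have eq: "on_line (pi_lambda q l) (pclass w) = ptl l ` (A \<union> {x2})"
  proof (intro set_eqI iffI)
    fix P assume "P \<in> on_line (pi_lambda q l) (pclass w)"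
    then obtain x where x: "x \<noteq> 0" "P = ptl l x" "T l w x = 0"
      by (auto simp: on_line_def mem_pi incident_ptl)
    have "x \<in> span2 x1 x2" using zeros_span[OF w l i t x(3)] .
    then obtain c1 c2 where c: "c1 \<in> Kq" "c2 \<in> Kq" "x = c1 * x1 + c2 * x2" by (auto simp: span2_def)
    show "P \<in> ptl l ` (A \<union> {x2})"
    proof (cases "c1 = 0")
      case True
      hence "c2 \<noteq> 0" using c x by auto
      hence "ptl l x2 = ptl l x" using ptl_eq_iff[OF nz(2)] c True by auto
      thus ?thesis using x by auto
    next
      case False
      have "x = c1 * (x1 + (c2 / c1) * x2)" using c False by (simp add: field_simps)
      moreover have "x1 + (c2 / c1) * x2 \<noteq> 0" using x calculation by auto
      ultimately have "ptl l (x1 + (c2 / c1) * x2) = ptl l x" using ptl_eq_iff c False by blast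
      moreover have "x1 + (c2 / c1) * x2 \<in> A" using c False unfolding A_def by blast
      ultimately show ?thesis using x by auto
    qed
  next
    fix P assume "P \<in> ptl l ` (A \<union> {x2})"
    then obtain x where x: "x \<in> A \<union> {x2}" "P = ptl l x" by auto
    have "\<exists>c1 c2. c1 \<in> Kq \<and> c2 \<in> Kq \<and> x = c1 * x1 + c2 * x2 \<and> (c1 \<noteq> 0 \<or> c2 \<noteq> 0)"
    proof (cases "x = x2")
      case True thus ?thesis by (intro exI[of _ 0] exI[of _ 1]) auto
    next
      case False
      then obtain c where "c \<in> Kq" "x = x1 + c * x2" using x(1) unfolding A_def by auto
      thus ?thesis by (intro exI[of _ 1] exI[of _ c]) auto
    qed
    then obtain c1 c2 where c: "c1 \<in> Kq" "c2 \<in> Kq" "x = c1 * x1 + c2 * x2" "c1 \<noteq> 0 \<or> c2 \<noteq> 0"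
      by blast
    have "x \<noteq> 0"
    proof
      assume "x = 0"
      thus False using c i unfolding ind2_def by auto
    qed
    moreover have "T l w x = 0" using c t by (simp add: T_lin2)
    ultimately show "P \<in> on_line (pi_lambda q l) (pclass w)"
      using x by (auto simp: on_line_def mem_pi incident_ptl)
  qed
  have inj: "inj_on (ptl l) (A \<union> {x2})"
  proof (rule inj_onI)
    fix x y assume x: "x \<in> A \<union> {x2}" and y: "y \<in> A \<union> {x2}" and e: "ptl l x = ptl l y"
    have "\<exists>a1 a2. a1 \<in> Kq \<and> a2 \<in> Kq \<and> x = a1 * x1 + a2 * x2 \<and> ((a1 = 1) \<or> (a1 = 0 \<and> a2 = 1))"
    proof (cases "x = x2")
      case True thus ?thesis by (intro exI[of _ 0] exI[of _ 1]) auto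
    next
      case False
      then obtain c where "c \<in> Kq" "x = x1 + c * x2" using x unfolding A_def by auto
      thus ?thesis by (intro exI[of _ 1] exI[of _ c]) auto
    qed
    then obtain a1 a2 where a: "a1 \<in> Kq" "a2 \<in> Kq" "x = a1 * x1 + a2 * x2" "(a1 = 1) \<or> (a1 = 0 \<and> a2 = 1)"
      by blast
    have "\<exists>b1 b2. b1 \<in> Kq \<and> b2 \<in> Kq \<and> y = b1 * x1 + b2 * x2 \<and> ((b1 = 1) \<or> (b1 = 0 \<and> b2 = 1))"
    proof (cases "y = x2")
      case True thus ?thesis by (intro exI[of _ 0] exI[of _ 1]) auto
    next
      case False
      then obtain c where "c \<in> Kq" "y = x1 + c * x2" using y unfolding A_def by auto
      thus ?thesis by (intro exI[of _ 1] exI[of _ c]) auto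
    qed
    then obtain b1 b2 where b: "b1 \<in> Kq" "b2 \<in> Kq" "y = b1 * x1 + b2 * x2" "(b1 = 1) \<or> (b1 = 0 \<and> b2 = 1)"
      by blast
    have "x \<noteq> 0" using a i unfolding ind2_def by (metis one_neq_zero)
    then obtain k where k: "k \<in> Kq" "k \<noteq> 0" "y = k * x" using e ptl_eq_iff by blast
    hence "(b1 - k * a1) * x1 + (b2 - k * a2) * x2 = 0" using a b by (simp add: algebra_simps)
    moreover have "b1 - k * a1 \<in> Kq" "b2 - k * a2 \<in> Kq" using a b k by auto
    ultimately have "b1 - k * a1 = 0 \<and> b2 - k * a2 = 0" using i unfolding ind2_def by blast
    hence "b1 = k * a1" "b2 = k * a2" by auto
    hence "a1 = b1 \<and> a2 = b2" using a(4) b(4) k(2) by auto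
    thus "x = y" using a b by simp
  qed
  have x2A: "x2 \<notin> A"
  proof
    assume "x2 \<in> A"
    then obtain c where c: "c \<in> Kq" "x2 = x1 + c * x2" unfolding A_def by auto
    hence "1 * x1 + (c - 1) * x2 = 0" by (simp add: algebra_simps)
    moreover have "c - 1 \<in> Kq" using c by auto
    ultimately show False using i unfolding ind2_def by (metis Kq_1 one_neq_zero)
  qed
  have "card A = q"
  proof -
    have "inj_on (\<lambda>c. x1 + c * x2) Kq" using nz by (auto simp: inj_on_def)
    thus ?thesis unfolding A_def using card_image card_Kq by metis
  qed
  hence "card (A \<union> {x2}) = q + 1" using x2A by (simp add: A_def)
  thus ?thesis using eq card_image[OF inj] by simp
qed

lemma meet_lines:
  fixes l :: 'a
  assumes l: "l \<noteq> 0" and L: "L \<in> sec_lines (pi_lambda q l)" and M: "M \<in> sec_lines (pi_lambda q l)"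
  shows "\<exists>P\<in>pi_lambda q l. incident P L \<and> incident P M"
proof -
  obtain w x1 x2 where Lw: "w \<noteq> (0,0,0)" "L = pclass w" "ind2 x1 x2" "T l w x1 = 0" "T l w x2 = 0"
    using sec_line_data[OF L] by blast
  obtain v y1 y2 where Mv: "v \<noteq> (0,0,0)" "M = pclass v" "ind2 y1 y2" "T l v y1 = 0" "T l v y2 = 0"
    using sec_line_data[OF M] by blast
  have "\<exists>z. z \<noteq> 0 \<and> T l w z = 0 \<and> T l v z = 0"
  proof (cases "y1 \<in> span2 x1 x2")
    case True
    thus ?thesis using span2_T[OF True Lw(4,5)] Mv ind2_nz[OF Mv(3)] by blast
  next
    case False
    hence i3: "ind3 x1 x2 y1" using ind2_ind3 Lw(3) by blast
    obtain c1 c2 c3 where c: "c1 \<in> Kq" "c2 \<in> Kq" "c3 \<in> Kq" "y2 = c1 * x1 + c2 * x2 + c3 * y1"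
      using ind3_span[OF i3] by blast
    define z where "z = c1 * x1 + c2 * x2"
    have z2: "z = (- c3) * y1 + 1 * y2" using c by (simp add: z_def)
    have "T l w z = 0" using c Lw by (simp add: z_def T_lin2)
    moreover have "T l v z = 0" unfolding z2 using c Mv by (subst T_lin2) auto
    moreover have "z \<noteq> 0"
    proof
      assume "z = 0"
      hence "(- c3) * y1 + 1 * y2 = 0" using z2 by simp
      thus False using Mv(3) c unfolding ind2_def by (metis Kq_1 Kq_minus one_neq_zero)
    qed
    ultimately show ?thesis by blast
  qed
  then obtain z where z: "z \<noteq> 0" "T l w z = 0" "T l v z = 0" by blast
  have "ptl l z \<in> pi_lambda q l" using z by (auto simp: mem_pi)
  moreover have "incident (ptl l z) L" "incident (ptl l z) M" using z Lw(2) Mv(2) by (simp_all add: incident_ptl)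
  ultimately show ?thesis by blast
qed

lemma ind3_sub:
  assumes "ind3 a b c"
  shows "ind2 a b" "ind2 a c" "ind2 b c"
  using assms unfolding ind3_def ind2_def
  by (metis Kq_0 add_0 mult_zero_left add.right_neutral)+

lemma ind3_plus:
  assumes "ind3 a b c"
  shows "ind3 a b (a + b + c)" "ind3 a c (a + b + c)" "ind3 b c (a + b + c)"
proof -
  have H: "\<And>c1 c2 c3. c1 \<in> Kq \<Longrightarrow> c2 \<in> Kq \<Longrightarrow> c3 \<in> Kq \<Longrightarrow> c1 * a + c2 * b + c3 * c = 0 \<Longrightarrow> c1 = 0 \<and> c2 = 0 \<and> c3 = 0"
    using assms unfolding ind3_def by blast
  show "ind3 a b (a + b + c)" unfolding ind3_def
  proof (intro ballI impI)
    fix c1 c2 c3 assume m: "c1 \<in> Kq" "c2 \<in> Kq" "c3 \<in> Kq" and e: "c1 * a + c2 * b + c3 * (a + b + c) = 0"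
    have "(c1 + c3) * a + (c2 + c3) * b + c3 * c = 0" using e by (simp add: algebra_simps)
    hence "c1 + c3 = 0 \<and> c2 + c3 = 0 \<and> c3 = 0" using H m by blast
    thus "c1 = 0 \<and> c2 = 0 \<and> c3 = 0" by (metis add.right_neutral)
  qed
  show "ind3 a c (a + b + c)" unfolding ind3_def
  proof (intro ballI impI)
    fix c1 c2 c3 assume m: "c1 \<in> Kq" "c2 \<in> Kq" "c3 \<in> Kq" and e: "c1 * a + c2 * c + c3 * (a + b + c) = 0"
    have "(c1 + c3) * a + c3 * b + (c2 + c3) * c = 0" using e by (simp add: algebra_simps)
    hence "c1 + c3 = 0 \<and> c3 = 0 \<and> c2 + c3 = 0" using H m by blast
    thus "c1 = 0 \<and> c2 = 0 \<and> c3 = 0" by (metis add.right_neutral)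
  qed
  show "ind3 b c (a + b + c)" unfolding ind3_def
  proof (intro ballI impI)
    fix c1 c2 c3 assume m: "c1 \<in> Kq" "c2 \<in> Kq" "c3 \<in> Kq" and e: "c1 * b + c2 * c + c3 * (a + b + c) = 0"
    have "c3 * a + (c1 + c3) * b + (c2 + c3) * c = 0" using e by (simp add: algebra_simps)
    hence "c3 = 0 \<and> c1 + c3 = 0 \<and> c2 + c3 = 0" using H m by blast
    thus "c1 = 0 \<and> c2 = 0 \<and> c3 = 0" by (metis add.right_neutral)
  qed
qed

lemma q_lt: "q < q ^ 3" "q * q < q ^ 3"
proof -
  have "1 < q * q" using q1 less_1_mult by blast
  hence "q * 1 < q * (q * q)" using q1 by (intro mult_strict_left_mono) auto
  thus "q < q ^ 3" by (simp add: power3_eq_cube)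
  have "(q * q) * 1 < (q * q) * q" using q1 \<open>1 < q * q\<close> by (intro mult_strict_left_mono) auto
  thus "q * q < q ^ 3" by (simp add: power3_eq_cube)
qed

lemma exists_basis: "\<exists>a b c. ind3 a b c"
proof -
  have "card Kq < card (UNIV :: 'a set)" using q_lt by (simp add: card_Kq card_UNIV)
  then obtain b where b: "b \<notin> Kq" by (metis UNIV_I card_mono finite leD subsetI)
  have i2: "ind2 1 b" unfolding ind2_def
  proof (intro ballI impI)
    fix c1 c2 assume m: "c1 \<in> Kq" "c2 \<in> Kq" and e: "c1 * 1 + c2 * b = 0"
    show "c1 = 0 \<and> c2 = 0"
    proof (cases "c2 = 0")
      case True thus ?thesis using e by simp
    next
      case False
      hence "b = - c1 / c2" using e by (simp add: field_simps) (metis add.commute add_eq_0_iff mult.commute)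
      hence "b \<in> Kq" using m by auto
      thus ?thesis using b by simp
    qed
  qed
  have "span2 1 b = (\<lambda>(c1, c2). c1 * 1 + c2 * b) ` (Kq \<times> Kq)" by (auto simp: span2_def)
  hence "card (span2 1 b) \<le> card (Kq \<times> Kq)" by (metis card_image_le finite)
  hence "card (span2 1 b) < card (UNIV :: 'a set)"
    using q_lt by (simp add: card_cartesian_product card_Kq card_UNIV)
  then obtain c where "c \<notin> span2 1 b" by (metis UNIV_I card_mono finite leD subsetI)
  thus ?thesis using ind2_ind3[OF i2] by blast
qed

lemma pi_subplane:
  fixes l :: 'a
  assumes l: "l \<noteq> 0"
  shows "is_subplane q (pi_lambda q l)"
  unfolding is_subplane_def
proof (intro conjI ballI impI)
  show "pi_lambda q l \<subseteq> pg_points" by (auto simp: mem_pi intro: ptl_in_pg)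
next
  fix L assume L: "L \<in> sec_lines (pi_lambda q l)"
  obtain w x1 x2 where Lw: "w \<noteq> (0,0,0)" "L = pclass w" "ind2 x1 x2" "T l w x1 = 0" "T l w x2 = 0"
    using sec_line_data[OF L] by blast
  show c: "card (on_line (pi_lambda q l) L) = q + 1" using on_line_card[OF l Lw(1,3,4,5)] Lw(2) by simp
  show "finite (on_line (pi_lambda q l) L)" using c by (metis card.infinite add_is_0 one_neq_zero)
next
  fix L M assume "L \<in> sec_lines (pi_lambda q l)" "M \<in> sec_lines (pi_lambda q l)"
  thus "\<exists>P\<in>pi_lambda q l. incident P L \<and> incident P M" using meet_lines l by blast
next
  obtain b1 b2 b3 where i123: "ind3 b1 b2 b3" using exists_basis by blast
  define b4 where "b4 = b1 + b2 + b3"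
  have i124: "ind3 b1 b2 b4" and i134: "ind3 b1 b3 b4" and i234: "ind3 b2 b3 b4"
    using ind3_plus[OF i123] by (simp_all add: b4_def)
  note i2s = ind3_sub[OF i123] ind3_sub[OF i124] ind3_sub[OF i134]
  have nz: "b1 \<noteq> 0" "b2 \<noteq> 0" "b3 \<noteq> 0" "b4 \<noteq> 0" using i2s ind2_nz by blast+
  have mem: "ptl l b1 \<in> pi_lambda q l" "ptl l b2 \<in> pi_lambda q l" "ptl l b3 \<in> pi_lambda q l" "ptl l b4 \<in> pi_lambda q l"
    using nz by (auto simp: mem_pi)
  have d: "distinct [ptl l b1, ptl l b2, ptl l b3, ptl l b4]"
    using i2s ptl_neq_of_ind2 by auto
  show "\<exists>P1\<in>pi_lambda q l. \<exists>P2\<in>pi_lambda q l. \<exists>P3\<in>pi_lambda q l. \<exists>P4\<in>pi_lambda q l.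
          distinct [P1,P2,P3,P4] \<and> \<not> collinear3 P1 P2 P3 \<and> \<not> collinear3 P1 P2 P4
          \<and> \<not> collinear3 P1 P3 P4 \<and> \<not> collinear3 P2 P3 P4"
    using mem d ind3_not_collinear[OF l i123] ind3_not_collinear[OF l i124]
      ind3_not_collinear[OF l i134] ind3_not_collinear[OF l i234] by blast
qed

end

context ffq
begin

lemma phi_vec_simp: "phi_vec q (x,y,z) = (F z, F x, F y)"
  by (simp add: phi_vec_def pow_q)

lemma psi_vec_simp: "psi_vec q t (x,y,z) = (t*x, F t*y, F (F t)*z)"
  by (simp add: psi_vec_def pow_q pow_q2)

lemma phi_vec_smul: "phi_vec q (smul3 c v) = smul3 (F c) (phi_vec q v)"
  by (cases v) (simp add: F_mult phi_vec_simp)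

lemma psi_vec_smul: "psi_vec q (t::'a) (smul3 c v) = smul3 c (psi_vec q t v)"
  by (cases v) (simp add: mult_ac psi_vec_simp)

lemma phi_pclass: "phi q (pclass (v::'a vec3)) = pclass (phi_vec q v)"
proof (rule set_eqI, rule iffI)
  fix u assume "u \<in> phi q (pclass v)"
  then obtain w where w: "w \<in> pclass v" "u = phi_vec q w" unfolding phi_def by (rule imageE)
  then obtain c where c: "c \<noteq> 0" "w = smul3 c v" unfolding mem_pclass by (elim exE conjE)
  have "u = smul3 (F c) (phi_vec q v)" using w c by (simp add: phi_vec_smul)
  moreover have "F c \<noteq> 0" using c by simp
  ultimately show "u \<in> pclass (phi_vec q v)" unfolding mem_pclass by (intro exI[of _ "F c"]) simp
next
  fix u assume "u \<in> pclass (phi_vec q v)"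
  then obtain d where d: "d \<noteq> 0" "u = smul3 d (phi_vec q v)" unfolding mem_pclass by (elim exE conjE)
  define c where "c = F (F d)"
  have Fc: "F c = d" "c \<noteq> 0" using d by (auto simp: c_def)
  hence "u = phi_vec q (smul3 c v)" using d by (simp add: phi_vec_smul)
  moreover have "smul3 c v \<in> pclass v" unfolding mem_pclass using Fc by (intro exI[of _ c]) simp
  ultimately show "u \<in> phi q (pclass v)" unfolding phi_def by (rule image_eqI)
qed

lemma psi_pclass: "psi_vec q (t::'a) ` pclass v = pclass (psi_vec q t v)"
proof (rule set_eqI, rule iffI)
  fix u assume "u \<in> psi_vec q t ` pclass v"
  then obtain w where w: "w \<in> pclass v" "u = psi_vec q t w" by (rule imageE)
  then obtain c where c: "c \<noteq> 0" "w = smul3 c v" unfolding mem_pclass by (elim exE conjE)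
  have "u = smul3 c (psi_vec q t v)" using w c by (simp add: psi_vec_smul)
  thus "u \<in> pclass (psi_vec q t v)" unfolding mem_pclass using c by (intro exI[of _ c]) simp
next
  fix u assume "u \<in> pclass (psi_vec q t v)"
  then obtain c where c: "c \<noteq> 0" "u = smul3 c (psi_vec q t v)" unfolding mem_pclass by (elim exE conjE)
  hence "u = psi_vec q t (smul3 c v)" by (simp add: psi_vec_smul)
  moreover have "smul3 c v \<in> pclass v" unfolding mem_pclass using c by (intro exI[of _ c]) simp
  ultimately show "u \<in> psi_vec q t ` pclass v" by (rule image_eqI)
qed

lemma phi_vec_nz: "(v::'a vec3) \<noteq> (0,0,0) \<Longrightarrow> phi_vec q v \<noteq> (0,0,0)"
  by (cases v) (auto simp: phi_vec_simp)

lemma phi_vec3: "phi_vec q (phi_vec q (phi_vec q v)) = (v::'a vec3)" by (cases v) (simp add: phi_vec_simp)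

lemma phi3: "phi q (phi q (phi q (pclass v))) = pclass (v::'a vec3)"
  by (simp add: phi_pclass phi_vec3)

lemma phi_pg: "(P::'a vec3 set) \<in> pg_points \<Longrightarrow> phi q P \<in> pg_points"
  by (metis pg_points_iff phi_pclass phi_vec_nz)

lemma phi_pg_lines: "(L::'a vec3 set) \<in> pg_lines \<Longrightarrow> phi q L \<in> pg_lines"
  by (metis pg_lines_iff phi_pclass phi_vec_nz)

lemma dot3_phi: "dot3 (phi_vec q w) (phi_vec q v) = F (dot3 w (v::'a vec3))"
  by (cases w; cases v) (simp add: F_add F_mult algebra_simps phi_vec_simp)

lemma incident_phi:
  fixes P L :: "'a vec3 set"
  assumes "P \<in> pg_points" "L \<in> pg_lines"
  shows "incident (phi q P) (phi q L) \<longleftrightarrow> incident P L"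
proof -
  obtain v w where "P = pclass v" "L = pclass w" using assms by (auto simp: pg_points_iff pg_lines_iff)
  thus ?thesis by (simp add: phi_pclass incident_pclass dot3_phi)
qed

lemma phi_inj_pg: "(P::'a vec3 set) \<in> pg_points \<Longrightarrow> Q \<in> pg_points \<Longrightarrow> phi q P = phi q Q \<Longrightarrow> P = Q"
  by (metis pg_points_iff phi3)

lemma phi_inj_lines: "(P::'a vec3 set) \<in> pg_lines \<Longrightarrow> Q \<in> pg_lines \<Longrightarrow> phi q P = phi q Q \<Longrightarrow> P = Q"
  by (metis pg_lines_iff phi3)

lemma N_simp: "N l = l ^ 3" if "F l = l" using that by (simp add: N_def power3_eq_cube)

lemma phi_ptl:
  assumes "F l = l" "l ^ 3 = 1" "x \<noteq> 0"
  shows "\<exists>y. y \<noteq> 0 \<and> phi q (ptl l x) = ptl l y"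
proof -
  have l0: "l \<noteq> 0" using assms by auto
  have "N (1 / l) = 1" using assms by (simp add: N_def F_divide power3_eq_cube)
  then obtain a where a: "a \<noteq> 0" "F a = (1 / l) * a" using hilbert90 by blast
  have Fa: "F (F a) = a / l ^ 2" using a assms(1) l0 by (simp add: F_mult F_divide power2_eq_square)
  define y where "y = a * x"
  have "phi q (ptl l x) = pclass (l * x, F x, F (F x))"
    using assms by (simp add: ptl_def phi_pclass F_mult phi_vec_simp)
  also have "(l * x, F x, F (F x)) = smul3 (l / a) (y, F y, l * F (F y))"
  proof -
    have c1: "l / a * (a * x) = l * x" using a by simp
    have c2: "l / a * (F a * F x) = F x" using a l0 by simp
    have c3: "l / a * (l * (F (F a) * F (F x))) = F (F x)" using a l0 Fa by (simp add: power2_eq_square)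
    show ?thesis using c1 c2 c3 by (simp add: y_def F_mult)
  qed
  also have "pclass \<dots> = ptl l y" unfolding ptl_def by (rule pclass_smul) (use a l0 in simp)
  finally have "phi q (ptl l x) = ptl l y" .
  moreover have "y \<noteq> 0" using a assms(3) by (simp add: y_def)
  ultimately show ?thesis by blast
qed

lemma phi_pi_sub:
  assumes "F l = l" "l ^ 3 = 1" "P \<in> pi_lambda q l"
  shows "phi q P \<in> pi_lambda q l"
  using assms phi_ptl by (auto simp: mem_pi)

lemma phi_pi:
  assumes "F l = l" "l ^ 3 = 1"
  shows "phi q ` pi_lambda q l = pi_lambda q l"
proof
  show "phi q ` pi_lambda q l \<subseteq> pi_lambda q l" using phi_pi_sub assms by blast
  show "pi_lambda q l \<subseteq> phi q ` pi_lambda q l"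
  proof
    fix P assume P: "P \<in> pi_lambda q l"
    then obtain x where "P = ptl l x" by (auto simp: mem_pi)
    hence "P = phi q (phi q (phi q P))" by (simp add: ptl_def phi3)
    moreover have "phi q (phi q P) \<in> pi_lambda q l" using phi_pi_sub assms P by blast
    ultimately show "P \<in> phi q ` pi_lambda q l" by blast
  qed
qed

lemma pi_orbit: "pi_lambda q (l::'a) = ST_orbit q (pclass (1, 1, l))"
proof -
  have "ST_orbit q (pclass (1, 1, l)) = {ptl l t | t. t \<noteq> 0}"
    by (auto simp: ST_orbit_def psi_pclass ptl_def mult_ac psi_vec_simp)
  thus ?thesis by (simp add: pi_lambda_eq)
qed

lemma pi_in_orb: "pi_lambda q (l::'a) \<in> orb_ST q"
proof -
  have "pclass (1,1,l) \<in> pg_points" unfolding pg_points_iff by (intro exI[of _ "(1,1,l)"]) simp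
  thus ?thesis unfolding orb_ST_def pi_orbit by blast
qed

lemma pi_inj:
  fixes l l' :: 'a
  assumes "pi_lambda q l = pi_lambda q l'"
  shows "l = l'"
proof -
  have "ptl l 1 \<in> pi_lambda q l" unfolding mem_pi by (intro exI[of _ 1]) simp
  hence "ptl l 1 \<in> pi_lambda q l'" using assms by simp
  then obtain x where x: "x \<noteq> 0" "ptl l 1 = ptl l' x" by (auto simp: mem_pi)
  then obtain c where c: "c \<noteq> 0" "(x, F x, l' * F (F x)) = smul3 c (1, 1, l)"
    by (auto simp: ptl_def pclass_eq_iff)
  hence "x = c" "F x = c" "l' * F (F x) = c * l" by auto
  thus ?thesis using c by (simp add: mult.commute)
qed

lemma fixed_points: "pi_lambda q (1::'a) = {P \<in> pg_points. phi q P = P}"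
proof (intro set_eqI iffI)
  fix P :: "'a vec3 set" assume "P \<in> pi_lambda q 1"
  then obtain x where x: "x \<noteq> 0" "P = ptl 1 x" by (auto simp: mem_pi)
  have "P \<in> pg_points" using x ptl_in_pg by simp
  moreover have "phi q P = P" using x by (simp add: ptl_def phi_pclass phi_vec_simp)
  ultimately show "P \<in> {P \<in> pg_points. phi q P = P}" by simp
next
  fix P :: "'a vec3 set" assume "P \<in> {P \<in> pg_points. phi q P = P}"
  then obtain v where v: "v \<noteq> (0,0,0)" "P = pclass v" "phi q P = P" by (auto simp: pg_points_iff)
  obtain x y z where vv: "v = (x, y, z)" by (cases v)
  from v have "pclass v = pclass (phi_vec q v)" by (simp add: phi_pclass)
  then obtain c where c: "c \<noteq> 0" "(F z, F x, F y) = smul3 c (x, y, z)"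
    by (auto simp: pclass_eq_iff vv phi_vec_simp)
  hence e: "F z = c * x" "F x = c * y" "F y = c * z" by auto
  have x0: "x \<noteq> 0"
  proof
    assume "x = 0"
    hence "y = 0" using e(2) c(1) by simp
    hence "z = 0" using e(3) c(1) by simp
    thus False using \<open>x = 0\<close> \<open>y = 0\<close> v(1) vv by simp
  qed
  have "F (F x) = F c * (c * z)" using e by (simp add: F_mult)
  hence "F (F (F x)) = F (F c) * (F c * (c * x))" using e by (simp add: F_mult)
  hence "x = N c * x" by (simp add: N_def mult_ac)
  hence "N c = 1" using x0 by simp
  then obtain s where s: "s \<noteq> 0" "F s = c * s" using hilbert90 by blast
  have Fs: "F (F s) = F c * (c * s)" using s by (simp add: F_mult)
  define u where "u = x / s"
  have "(x, y, z) = smul3 s (u, F u, 1 * F (F u))"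
  proof -
    have c1: "s * u = x" using s by (simp add: u_def)
    have "F x = c * y" by (fact e(2))
    hence c2: "s * F u = y" using s c by (simp add: u_def F_divide field_simps)
    have "F (F x) = F c * (c * z)" using e by (simp add: F_mult)
    hence c3: "s * (1 * F (F u)) = z" using s c Fs by (simp add: u_def F_divide field_simps)
    show ?thesis using c1 c2 c3 by simp
  qed
  hence "P = pclass (smul3 s (u, F u, 1 * F (F u)))" using v vv by simp
  also have "\<dots> = ptl 1 u" unfolding ptl_def by (rule pclass_smul) (use s in simp)
  finally have "P = ptl 1 u" .
  moreover have "u \<noteq> 0" using x0 s by (simp add: u_def)
  ultimately show "P \<in> pi_lambda q 1" by (auto simp: mem_pi)
qed

end

context ffq
begin

lemma N_F: "F (N x) = N x" by (simp add: N_def F_mult mult_ac)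
lemma N_mult: "N (x * y) = N x * N y" by (simp add: N_def F_mult mult_ac)
lemma N_div: "N (x / y) = N x / N y" by (simp add: N_def F_divide)

lemma cube_root_Kq:
  assumes r3: "r ^ 3 = 1" and Nr: "N r = 1"
  shows "F r = r"
proof -
  have gen: "r ^ (3 * d + m) = r ^ m" for d m by (simp add: power_add power_mult r3)
  have Fr: "F r = r ^ (q mod 3)"
    using gen[of "q div 3" "q mod 3"] by (simp add: F_def)
  show ?thesis
  proof (cases "q mod 3 = 0")
    case True
    hence "F r = 1" using Fr by simp
    hence "r = 1" using F_eq_iff[of r 1] by simp
    thus ?thesis by simp
  next
    case n0: False
    show ?thesis
    proof (cases "q mod 3 = 1")
      case True
      thus ?thesis using Fr by simp
    next
      case False
      hence "q mod 3 = 2" using n0 by arith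
      hence Fr2: "F r = r ^ 2" using Fr by simp
      hence "F (F r) = r ^ 4" by (simp add: F_power flip: power_mult)
      also have "r ^ 4 = r" using gen[of 1 1] by simp
      finally have "N r = r ^ 4" using Fr2 by (simp add: N_def power_numeral_reduce)
      hence "r = 1" using Nr gen[of 1 1] by simp
      thus ?thesis by simp
    qed
  qed
qed

lemma orbit_algebra:
  assumes nz: "a \<noteq> 0" "b \<noteq> 0" "c \<noteq> 0" "t \<noteq> 0" "m \<noteq> 0"
    and e1: "t * a = m * F c" and e2: "F t * b = m * F a" and e3: "F (F t) * c = m * F b"
  shows "\<exists>y l \<nu>. y \<noteq> 0 \<and> \<nu> \<noteq> 0 \<and> F l = l \<and> l ^ 3 = 1 \<and> (a, b, c) = smul3 \<nu> (y, F y, l * F (F y))"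
proof -
  have Ft: "F t \<noteq> 0" "F (F t) \<noteq> 0" using nz by auto
  have b: "b = m * F a / F t" using e2 Ft by (simp add: field_simps)
  have Fb: "F b = F m * F (F a) / F (F t)" by (simp add: b F_mult F_divide)
  have c: "c = m * F b / F (F t)" using e3 Ft by (simp add: field_simps)
  have FFb: "F (F b) = F (F m) * a / t" by (simp add: Fb F_mult F_divide)
  have Fc: "F c = F m * F (F b) / t" by (simp add: c F_mult F_divide)
  have "t * a = m * (F m * (F (F m) * a / t) / t)" using e1 Fc FFb by simp
  hence "t * t * t * a = N m * a" using nz by (simp add: N_def field_simps)
  hence Nm: "N m = t ^ 3" using nz by (simp add: power3_eq_cube)
  have "F (t ^ 3) = t ^ 3" using N_F[of m] Nm by simp
  hence Ft3: "F t ^ 3 = t ^ 3" by (simp add: F_power)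
  define r where "r = F t / t"
  have r3: "r ^ 3 = 1" using Ft3 nz by (simp add: r_def power_divide)
  have Nr: "N r = 1" using nz Ft by (simp add: r_def N_def F_divide)
  have Fr: "F r = r" using cube_root_Kq r3 Nr by blast
  have r0: "r \<noteq> 0" using Ft nz by (simp add: r_def)
  have Ftr: "F t = r * t" using nz by (simp add: r_def)
  have "F (F t) = F (r * t)" using Ftr by simp
  also have "\<dots> = F r * F t" by (rule F_mult)
  also have "\<dots> = r * (r * t)" using Fr Ftr by simp
  finally have FFtr: "F (F t) = r * (r * t)" .
  have FFr: "F (F t) = r * F t" using FFtr Ftr by simp
  define l where "l = 1 / r"
  have Fl: "F l = l" using Fr by (simp add: l_def F_divide)
  have l3: "l ^ 3 = 1" using r3 by (simp add: l_def power_divide)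
  define \<beta> where "\<beta> = m / F t"
  have "N t = t ^ 3"
  proof -
    have "N t = r ^ 3 * t ^ 3" unfolding N_def FFtr unfolding Ftr by (simp add: power3_eq_cube mult_ac)
    thus ?thesis using r3 by simp
  qed
  moreover have "N (F t) = N t" by (simp add: N_def mult_ac)
  ultimately have "N \<beta> = 1" using Nm nz by (simp add: \<beta>_def N_div)
  then obtain s where s: "s \<noteq> 0" "F s = \<beta> * s" using hilbert90 by blast
  have FFs: "F (F s) = F \<beta> * (\<beta> * s)" using s by (simp add: F_mult)
  define y where "y = a * s"
  have "(a, b, c) = smul3 (1 / s) (y, F y, l * F (F y))"
  proof -
    have c1: "1 / s * y = a" using s by (simp add: y_def)
    have c2: "1 / s * F y = b" using s Ft by (simp add: y_def F_mult b \<beta>_def)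
    have Fbeta: "F \<beta> = F m / F (F t)" by (simp add: \<beta>_def F_divide)
    have FFy: "F (F y) = F (F a) * (F \<beta> * (\<beta> * s))" unfolding y_def F_mult FFs ..
    have "1 / s * (l * F (F y)) = l * F (F a) * F \<beta> * \<beta>" using s unfolding FFy by simp
    also have "\<dots> = l * F (F a) * (F m / F (F t)) * (m / F t)" by (simp only: Fbeta) (simp add: \<beta>_def)
    also have "\<dots> = F m * F (F a) * m / (F (F t) * F (F t))"
      unfolding FFr l_def using r0 Ft by (simp add: field_simps)
    also have "\<dots> = c" by (simp add: c Fb field_simps)
    finally have c3: "1 / s * (l * F (F y)) = c" .
    show ?thesis using c1 c2 c3 by simp
  qed
  moreover have "y \<noteq> 0" "1 / s \<noteq> 0" using nz s by (auto simp: y_def)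
  ultimately show ?thesis using Fl l3 by blast
qed

lemma ST_orbit_pclass: "ST_orbit q (pclass (v::'a vec3)) = {pclass (psi_vec q t v) | t. t \<noteq> 0}"
  by (simp add: ST_orbit_def psi_pclass)

lemma ST_orbit_ptl:
  assumes "y \<noteq> 0"
  shows "ST_orbit q (ptl l y) = pi_lambda q l"
proof -
  have "ST_orbit q (ptl l y) = {ptl l (t * y) | t. t \<noteq> 0}"
    unfolding ptl_def ST_orbit_pclass by (simp add: psi_vec_simp F_mult mult_ac)
  also have "\<dots> = {ptl l x | x. x \<noteq> 0}"
  proof (intro set_eqI iffI)
    fix P assume "P \<in> {ptl l (t * y) | t. t \<noteq> 0}"
    then obtain t where "t \<noteq> 0" "P = ptl l (t * y)" by blast
    thus "P \<in> {ptl l x | x. x \<noteq> 0}" using assms by auto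
  next
    fix P assume "P \<in> {ptl l x | x. x \<noteq> 0}"
    then obtain x where x: "x \<noteq> 0" "P = ptl l x" by blast
    hence "P = ptl l ((x / y) * y)" "x / y \<noteq> 0" using assms by auto
    thus "P \<in> {ptl l (t * y) | t. t \<noteq> 0}" by blast
  qed
  finally show ?thesis by (simp add: pi_lambda_eq)
qed

lemma orbit_classify:
  assumes B: "B \<in> orb_ST q" and sp: "is_subplane q B" and inv: "phi q ` B = B"
  shows "\<exists>l::'a. F l = l \<and> l ^ 3 = 1 \<and> B = pi_lambda q l"
proof -
  obtain P where P: "P \<in> pg_points" "B = ST_orbit q P" using B by (auto simp: orb_ST_def)
  obtain a b c where v: "(a, b, c) \<noteq> (0,0,0)" "P = pclass (a, b, c)" using P(1) by (auto simp: pg_points_iff)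
  have Bq: "B = {pclass (t * a, F t * b, F (F t) * c) | t. t \<noteq> 0}"
    using P(2) v(2) by (simp add: ST_orbit_pclass psi_vec_simp)
  show ?thesis
  proof (cases "a = 0 \<or> b = 0 \<or> c = 0")
    case True
    define w0 :: "'a vec3" where "w0 = (if a = 0 then (1,0,0) else if b = 0 then (0,1,0) else (0,0,1))"
    have w0nz: "w0 \<noteq> (0,0,0)" by (simp add: w0_def)
    have inc: "incident Q (pclass w0)" if "Q \<in> B" for Q
    proof -
      obtain t where "Q = pclass (t * a, F t * b, F (F t) * c)" using \<open>Q \<in> B\<close> Bq by blast
      thus ?thesis using True by (auto simp: incident_pclass w0_def)
    qed
    have L0: "pclass w0 \<in> pg_lines" unfolding pg_lines_iff using w0nz by blast
    have col: "collinear3 P1 P2 P3" if "P1 \<in> B" "P2 \<in> B" "P3 \<in> B" for P1 P2 P3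
      unfolding collinear3_def using inc[OF that(1)] inc[OF that(2)] inc[OF that(3)] L0 by blast
    have quad: "\<exists>P1\<in>B. \<exists>P2\<in>B. \<exists>P3\<in>B. \<exists>P4\<in>B. distinct [P1,P2,P3,P4]
          \<and> \<not> collinear3 P1 P2 P3 \<and> \<not> collinear3 P1 P2 P4
          \<and> \<not> collinear3 P1 P3 P4 \<and> \<not> collinear3 P2 P3 P4"
      using sp unfolding is_subplane_def by (rule conjunct2[THEN conjunct2, THEN conjunct2])
    then obtain P1 P2 P3 where "P1 \<in> B" "P2 \<in> B" "P3 \<in> B" "\<not> collinear3 P1 P2 P3"
      by (elim bexE conjE) blast
    thus ?thesis using col by blast
  next
    case False
    hence nz: "a \<noteq> 0" "b \<noteq> 0" "c \<noteq> 0" by auto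
    have "P \<in> B" unfolding Bq using v(2) by (intro CollectI exI[of _ 1]) simp
    hence "phi q P \<in> B" using inv by blast
    then obtain t where t: "t \<noteq> 0" "phi q P = pclass (t * a, F t * b, F (F t) * c)" using Bq by blast
    have "phi q P = pclass (F c, F a, F b)" using v(2) by (simp add: phi_pclass phi_vec_simp)
    hence "pclass (F c, F a, F b) = pclass (t * a, F t * b, F (F t) * c)" using t by simp
    then obtain m where m: "m \<noteq> 0" "(t * a, F t * b, F (F t) * c) = smul3 m (F c, F a, F b)"
      unfolding pclass_eq_iff by blast
    hence e: "t * a = m * F c" "F t * b = m * F a" "F (F t) * c = m * F b" by simp_all
    obtain y l \<nu> where yl: "y \<noteq> 0" "\<nu> \<noteq> 0" "F l = l" "l ^ 3 = 1" "(a, b, c) = smul3 \<nu> (y, F y, l * F (F y))"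
      using orbit_algebra[OF nz t(1) m(1) e] by blast
    have "P = pclass (smul3 \<nu> (y, F y, l * F (F y)))" using v(2) yl(5) by simp
    hence "P = ptl l y" unfolding ptl_def using pclass_smul[OF yl(2)] by metis
    hence "B = pi_lambda q l" using P(2) ST_orbit_ptl yl(1) by simp
    thus ?thesis using yl by blast
  qed
qed

lemma cross_zero:
  fixes a b c x y z :: "'b::field"
  assumes "(a, b, c) \<noteq> (0,0,0)" "b*z - c*y = 0" "c*x - a*z = 0" "a*y - b*x = 0"
  shows "\<exists>k. (x, y, z) = smul3 k (a, b, c)"
proof -
  have "a \<noteq> 0 \<or> b \<noteq> 0 \<or> c \<noteq> 0" using assms(1) by auto
  moreover {
    assume a: "a \<noteq> 0"
    have "y = (x / a) * b" "z = (x / a) * c" using a assms(3,4) by (simp_all add: field_simps)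
    hence ?thesis using a by (intro exI[of _ "x / a"]) simp }
  moreover {
    assume b: "b \<noteq> 0"
    have "x = (y / b) * a" "z = (y / b) * c" using b assms(2,4) by (simp_all add: field_simps)
    hence ?thesis using b by (intro exI[of _ "y / b"]) simp }
  moreover {
    assume c: "c \<noteq> 0"
    have "x = (z / c) * a" "y = (z / c) * b" using c assms(2,3) by (simp_all add: field_simps)
    hence ?thesis using c by (intro exI[of _ "z / c"]) simp }
  ultimately show ?thesis by blast
qed

lemma uniq_meet:
  fixes P1 P2 L1 L2 :: "'b::field vec3 set"
  assumes "P1 \<in> pg_points" "P2 \<in> pg_points" "L1 \<in> pg_lines" "L2 \<in> pg_lines" "L1 \<noteq> L2"
    and "incident P1 L1" "incident P1 L2" "incident P2 L1" "incident P2 L2"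
  shows "P1 = P2"
proof (rule ccontr)
  assume ne: "P1 \<noteq> P2"
  obtain a b c where v1: "(a,b,c) \<noteq> (0,0,0)" "P1 = pclass (a,b,c)" using assms(1) by (auto simp: pg_points_iff)
  obtain x y z where v2: "(x,y,z) \<noteq> (0,0,0)" "P2 = pclass (x,y,z)" using assms(2) by (auto simp: pg_points_iff)
  obtain w1 where w1: "w1 \<noteq> (0,0,0)" "L1 = pclass w1" using assms(3) by (auto simp: pg_lines_iff)
  obtain w2 where w2: "w2 \<noteq> (0,0,0)" "L2 = pclass w2" using assms(4) by (auto simp: pg_lines_iff)
  define X where "X = (b*z - c*y, c*x - a*z, a*y - b*x)"
  have Xnz: "X \<noteq> (0,0,0)"
  proof
    assume "X = (0,0,0)"
    hence "b*z - c*y = 0" "c*x - a*z = 0" "a*y - b*x = 0" by (auto simp: X_def)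
    then obtain k where k: "(x,y,z) = smul3 k (a,b,c)" using cross_zero v1(1) by blast
    hence "k \<noteq> 0" using v2(1) by auto
    hence "P1 = P2" using k v1 v2 by (auto simp: pclass_eq_iff)
    thus False using ne by simp
  qed
  have mult: "\<exists>k. k \<noteq> 0 \<and> w = smul3 k X" if w: "w \<noteq> (0,0,0)" "dot3 w (a,b,c) = 0" "dot3 w (x,y,z) = 0" for w
  proof -
    obtain d e f where wd: "w = (d,e,f)" by (cases w)
    have D1: "d*a + e*b + f*c = 0" and D2: "d*x + e*y + f*z = 0" using w wd by auto
    have i1: "(c*x - a*z)*f - (a*y - b*x)*e = x*(d*a + e*b + f*c) - a*(d*x + e*y + f*z)" by (simp add: algebra_simps)
    have i2: "(a*y - b*x)*d - (b*z - c*y)*f = y*(d*a + e*b + f*c) - b*(d*x + e*y + f*z)" by (simp add: algebra_simps)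
    have i3: "(b*z - c*y)*e - (c*x - a*z)*d = z*(d*a + e*b + f*c) - c*(d*x + e*y + f*z)" by (simp add: algebra_simps)
    have "\<exists>k. (d, e, f) = smul3 k (b*z - c*y, c*x - a*z, a*y - b*x)"
      by (rule cross_zero) (use Xnz i1 i2 i3 D1 D2 in \<open>simp_all add: X_def\<close>)
    then obtain k where k: "w = smul3 k X" using wd by (auto simp: X_def)
    hence "k \<noteq> 0" using w(1) by (cases X) auto
    thus ?thesis using k by blast
  qed
  have "dot3 w1 (a,b,c) = 0" "dot3 w1 (x,y,z) = 0" "dot3 w2 (a,b,c) = 0" "dot3 w2 (x,y,z) = 0"
    using assms(6-9) v1 v2 w1 w2 by (simp_all add: incident_pclass)
  then obtain k1 k2 where k: "k1 \<noteq> 0" "w1 = smul3 k1 X" "k2 \<noteq> 0" "w2 = smul3 k2 X"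
    using mult w1(1) w2(1) by meson
  hence w21: "w2 = smul3 (k2 / k1) w1" by simp
  have "L1 = L2" unfolding w1(2) w2(2) pclass_eq_iff using w21 k by (intro exI[of _ "k2 / k1"]) simp
  thus False using assms(5) by simp
qed

lemma phi_ptl_vec: "F l = l \<Longrightarrow> phi q (ptl l x) = pclass (l * x, F x, F (F x))"
  by (simp add: ptl_def phi_pclass F_mult phi_vec_simp)

lemma phi2_ptl_vec: "F l = l \<Longrightarrow> phi q (pclass (l * x, F x, F (F x))) = pclass (x, l * F x, F (F x))"
  by (simp add: phi_pclass F_mult phi_vec_simp)

lemma cube_facts:
  fixes l :: 'a
  assumes "l ^ 3 = 1" "l \<noteq> 1"
  shows "l * l + l + 1 = 0" "l + 2 \<noteq> 0"
proof -
  have "(l - 1) * (l * l + l + 1) = l ^ 3 - 1" by (simp add: algebra_simps power3_eq_cube)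
  hence "(l - 1) * (l * l + l + 1) = 0" using assms by simp
  thus h: "l * l + l + 1 = 0" using assms by simp
  have h3: "(3::'a) \<noteq> 0"
  proof
    assume "(3::'a) = 0"
    have "(l - 1) * (l - 1) = (l * l + l + 1) - 3 * l" by (simp add: algebra_simps)
    also have "\<dots> = 0" using h \<open>(3::'a) = 0\<close> by simp
    finally show False using assms by simp
  qed
  show "l + 2 \<noteq> 0"
  proof
    assume "l + 2 = 0"
    hence "l = -2" by (simp add: eq_neg_iff_add_eq_0)
    hence "l * l + l + 1 = 3" by simp
    thus False using h h3 by simp
  qed
qed

lemma point_III:
  assumes Fl: "F l = l" and l3: "l ^ 3 = 1" and l1: "l \<noteq> 1" and x: "x \<noteq> 0"
  shows "point_type_III q (ptl l x)"
  unfolding point_type_III_def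
proof (rule notI)
  assume C: "collinear3 (ptl l x) (phi q (ptl l x)) (phi q (phi q (ptl l x)))"
  have "collinear3 (ptl l x) (pclass (l * x, F x, F (F x))) (pclass (x, l * F x, F (F x)))"
    using C by (simp only: phi2_ptl_vec[OF Fl] phi_ptl_vec[OF Fl])
  then obtain L where L: "L \<in> pg_lines" "incident (ptl l x) L" "incident (pclass (l * x, F x, F (F x))) L"
      "incident (pclass (x, l * F x, F (F x))) L" by (auto simp: collinear3_def)
  then obtain d e f where w: "(d,e,f) \<noteq> (0,0,0)" "L = pclass (d,e,f)" by (auto simp: pg_lines_iff)
  define D where "D = d * x"
  define E where "E = e * F x"
  define G where "G = f * F (F x)"
  have eq1: "D + E + l * G = 0" using L(2) w(2) by (simp add: ptl_def incident_pclass D_def E_def G_def mult_ac)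
  have eq2: "l * D + E + G = 0" using L(3) w(2) by (simp add: incident_pclass D_def E_def G_def mult_ac)
  have eq3: "D + l * E + G = 0" using L(4) w(2) by (simp add: incident_pclass D_def E_def G_def mult_ac)
  have "(l - 1) * (D - E) = (l * D + E + G) - (D + l * E + G)" by (simp add: algebra_simps)
  hence "(l - 1) * (D - E) = 0" using eq2 eq3 by simp
  hence DE: "D = E" using l1 by simp
  have "(l - 1) * (G - E) = (D + E + l * G) - (D + l * E + G)" by (simp add: algebra_simps)
  hence "(l - 1) * (G - E) = 0" using eq1 eq3 by simp
  hence GE: "G = E" using l1 by simp
  have "(l + 2) * D = D + E + l * G" using DE GE by (simp add: algebra_simps)
  hence "(l + 2) * D = 0" using eq1 by simp
  hence D0: "D = 0" using cube_facts[OF l3 l1] by simp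
  hence "d = 0" "e = 0" "f = 0" using DE GE x by (auto simp: D_def E_def G_def)
  thus False using w(1) by simp
qed

lemma two_elems:
  assumes "finite A" "card A \<ge> 2"
  shows "\<exists>a b. a \<in> A \<and> b \<in> A \<and> a \<noteq> b"
proof -
  obtain a where a: "a \<in> A" using assms by fastforce
  have "card (A - {a}) \<ge> 1" using assms a by simp
  hence "A - {a} \<noteq> {}" by (metis card.empty not_one_le_zero)
  then obtain b where "b \<in> A - {a}" by blast
  thus ?thesis using a by blast
qed

lemma line_III:
  fixes l :: 'a
  assumes Fl: "F l = l" and l3: "l ^ 3 = 1" and l1: "l \<noteq> 1"
    and L: "L \<in> plane_lines q (pi_lambda q l)"
  shows "line_type_III q L"
  unfolding line_type_III_def
proof
  define B where "B = pi_lambda q l"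
  have l0: "l \<noteq> 0" using l3 by auto
  have sp: "is_subplane q B" using pi_subplane[OF l0] by (simp add: B_def)
  have phiB: "\<And>P. P \<in> B \<Longrightarrow> phi q P \<in> B" using phi_pi_sub[OF Fl l3] by (simp add: B_def)
  have Bpg: "\<And>P. P \<in> B \<Longrightarrow> P \<in> pg_points" using ptl_in_pg by (auto simp: B_def mem_pi)
  have III: "\<And>P. P \<in> B \<Longrightarrow> point_type_III q P" using point_III[OF Fl l3 l1] by (auto simp: B_def mem_pi)
  have Lpg: "L \<in> pg_lines" and cL: "finite (on_line B L)" "card (on_line B L) = q + 1"
    using L by (auto simp: plane_lines_def B_def)
  have "card (on_line B L) \<ge> 2" using cL q1 by simp
  then obtain P1 P2 where P12: "P1 \<in> on_line B L" "P2 \<in> on_line B L" "P1 \<noteq> P2"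
    using two_elems cL(1) by blast
  have P1: "P1 \<in> B" "incident P1 L" and P2: "P2 \<in> B" "incident P2 L" using P12 by (auto simp: on_line_def)
  have phiL: "phi q L \<in> pg_lines" using phi_pg_lines[OF Lpg] .
  have phi2L: "phi q (phi q L) \<in> pg_lines" using phi_pg_lines[OF phiL] .
  have phi3L: "phi q (phi q (phi q L)) = L" using Lpg phi3 by (auto simp: pg_lines_iff)
  assume "concurrent3 L (phi q L) (phi q (phi q L))"
  then obtain Q where Q: "Q \<in> pg_points" "incident Q L" "incident Q (phi q L)" "incident Q (phi q (phi q L))"
    by (auto simp: concurrent3_def)
  show False
  proof (cases "phi q L = L")
    case True
    have "incident (phi q P1) L" using incident_phi[OF Bpg[OF P1(1)] Lpg] P1(2) True by simp
    moreover have "incident (phi q (phi q P1)) L"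
      using incident_phi[OF phi_pg[OF Bpg[OF P1(1)]] phiL] \<open>incident (phi q P1) L\<close> True by simp
    ultimately have "collinear3 P1 (phi q P1) (phi q (phi q P1))"
      unfolding collinear3_def using Lpg P1(2) by blast
    thus False using III[OF P1(1)] by (simp add: point_type_III_def)
  next
    case False
    have ne1: "phi q (phi q L) \<noteq> phi q L" using phi_inj_lines[OF phiL Lpg] False by blast
    have ne2: "phi q (phi q L) \<noteq> L"
    proof
      assume "phi q (phi q L) = L"
      hence "phi q (phi q (phi q L)) = phi q L" by simp
      thus False using phi3L False by simp
    qed
    have pQ: "phi q Q \<in> pg_points" using phi_pg[OF Q(1)] .
    have i1: "incident (phi q Q) (phi q L)" using incident_phi[OF Q(1) Lpg] Q(2) by simp
    have i2: "incident (phi q Q) (phi q (phi q L))" using incident_phi[OF Q(1) phiL] Q(3) by simp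
    have i3: "incident (phi q Q) L" using incident_phi[OF Q(1) phi2L] Q(4) phi3L by simp
    have QQ: "phi q Q = Q" using uniq_meet[OF pQ Q(1) phiL phi2L ne1[symmetric] i1 i2 Q(3) Q(4)] .
    have "L \<in> sec_lines B" unfolding sec_lines_def using Lpg P1 P2 P12(3) by blast
    moreover have "phi q L \<in> sec_lines B"
    proof -
      have "phi q P1 \<noteq> phi q P2" using phi_inj_pg[OF Bpg[OF P1(1)] Bpg[OF P2(1)]] P12(3) by blast
      moreover have "incident (phi q P1) (phi q L)" "incident (phi q P2) (phi q L)"
        using incident_phi[OF Bpg[OF P1(1)] Lpg] incident_phi[OF Bpg[OF P2(1)] Lpg] P1 P2 by simp_all
      ultimately show ?thesis unfolding sec_lines_def using phiL phiB P1(1) P2(1) by blast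
    qed
    ultimately obtain R where R: "R \<in> B" "incident R L" "incident R (phi q L)"
      using meet_lines[OF l0] by (auto simp: B_def)
    have "R = Q" using uniq_meet[OF Bpg[OF R(1)] Q(1) Lpg phiL False[symmetric] R(2) R(3) Q(2) Q(3)] .
    hence QB: "Q \<in> B" using R(1) by simp
    have "collinear3 Q (phi q Q) (phi q (phi q Q))"
      unfolding collinear3_def QQ using Lpg Q(2) by blast
    thus False using III[OF QB] by (simp add: point_type_III_def)
  qed
qed

end

theorem theorem3p2:
  fixes q :: nat
  assumes "\<exists>p k. prime p \<and> k > 0 \<and> q = p ^ k"
    and "card (UNIV :: 'a::{finite,field} set) = q ^ 3"
  shows "{B \<in> orb_ST q. is_subplane q B \<and> phi q ` B = B}
           = pi_lambda q ` {l::'a. l ^ q = l \<and> l ^ 3 = 1}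
       \<and> card {B \<in> orb_ST q. is_subplane q (B::'a vec3 set set) \<and> phi q ` B = B} = gcd 3 (q - 1)
       \<and> pi_lambda q (1::'a) = {P \<in> pg_points. phi q P = P}
       \<and> (gcd 3 (q - 1) = 3 \<longrightarrow>
           (\<forall>l::'a. l ^ q = l \<and> l ^ 3 = 1 \<and> l \<noteq> 1 \<longrightarrow>
              (\<forall>P \<in> pi_lambda q l. point_type_III q P)
            \<and> (\<forall>L \<in> plane_lines q (pi_lambda q l). line_type_III q L)))"
proof -
  obtain p k where pk: "prime p" "k > 0" "q = p ^ k" using assms(1) by blast
  have cardp: "card (UNIV::'a set) = p ^ (3 * k)" using assms(2) pk(3) by (simp add: power_mult mult.commute)
  have ch: "CHAR('a) = p" using char_is_p[OF pk(1) _ cardp] pk(2) by simp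
  have q1: "q > 1" using pk prime_gt_1_nat one_less_power by blast
  have add: "(x + y) ^ q = x ^ q + y ^ q" for x y :: 'a
    using freshmans_dream'[where m=q and n=k and x=x and y=y] ch pk by simp
  interpret ffq q "\<lambda>x::'a. x ^ q"
    by unfold_locales (use q1 assms(2) add in auto)
  define S where "S = {B \<in> orb_ST q. is_subplane q (B::'a vec3 set set) \<and> phi q ` B = B}"
  define R where "R = {l::'a. l ^ q = l \<and> l ^ 3 = 1}"
  have SR: "S = pi_lambda q ` R"
  proof
    show "S \<subseteq> pi_lambda q ` R"
    proof
      fix B assume "B \<in> S"
      hence "B \<in> orb_ST q" "is_subplane q B" "phi q ` B = B" by (auto simp: S_def)
      then obtain l where "l ^ q = l" "l ^ 3 = 1" "B = pi_lambda q l" using orbit_classify by blast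
      thus "B \<in> pi_lambda q ` R" by (auto simp: R_def)
    qed
  next
    show "pi_lambda q ` R \<subseteq> S"
    proof
      fix B assume "B \<in> pi_lambda q ` R"
      then obtain l where l: "l ^ q = l" "l ^ 3 = 1" "B = pi_lambda q l" by (auto simp: R_def)
      have "l \<noteq> 0" using l by auto
      thus "B \<in> S" using l pi_in_orb pi_subplane phi_pi by (simp add: S_def)
    qed
  qed
  have cardS: "card S = gcd 3 (q - 1)"
  proof -
    have "inj_on (pi_lambda q) R" using pi_inj by (auto simp: inj_on_def)
    hence "card S = card R" using SR card_image by metis
    also have "card R = gcd 3 (q - 1)" using card_cuberoots by (simp add: R_def)
    finally show ?thesis .
  qed
  have III: "gcd 3 (q - 1) = 3 \<longrightarrow>
           (\<forall>l::'a. l ^ q = l \<and> l ^ 3 = 1 \<and> l \<noteq> 1 \<longrightarrow>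
              (\<forall>P \<in> pi_lambda q l. point_type_III q P)
            \<and> (\<forall>L \<in> plane_lines q (pi_lambda q l). line_type_III q L))"
  proof (intro impI allI conjI ballI)
    fix l :: 'a and P assume l: "l ^ q = l \<and> l ^ 3 = 1 \<and> l \<noteq> 1" and P: "P \<in> pi_lambda q l"
    then obtain x where "x \<noteq> 0" "P = ptl l x" by (auto simp: mem_pi)
    thus "point_type_III q P" using point_III l by simp
  next
    fix l :: 'a and L assume l: "l ^ q = l \<and> l ^ 3 = 1 \<and> l \<noteq> 1" and L: "L \<in> plane_lines q (pi_lambda q l)"
    show "line_type_III q L" using line_III[of l L] l L by blast
  qed
  show ?thesis using SR cardS fixed_points III unfolding S_def R_def by simp
qed


end
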